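(* Let $n\ge2$, $1\le k\le n$, $r:=n-k$. Let $\mathbb X=(X_\alpha)_{\alpha\in I}$ be the rook coincidence process (defined in the context) and let $\mathbb Y=(Y_\alpha)_{\alpha\in I}$ be a family of independent Poisson random variables with $\mathbb E Y_\alpha=\mathbb E X_\alpha$ for all $\alpha\in I$. Define $$d:=r(r-1)\Big(r-\tfrac32\Big)\frac{362}{9n^2}\cdot\frac{n\big(n-\frac{301}{181}\big)+166}{(n-1)^2}.$$ Then $d_{TV}(\mathcal L(\mathbb X),\mathcal L(\mathbb Y))\le d$. Furthermore, for $s\in\{\mathrm{RR},\mathrm{CC},\mathrm{RC},\mathrm{CR}\}$ let $W_s:=\sum_{\alpha\in I_s}X_\alpha$ and let $S_{\mathrm{RR}},S_{\mathrm{CC}},S_{\mathrm{RC}},S_{\mathrm{CR}}$ be independent Poisson random variables with $\mathbb E S_s=\mathbb E W_s$. Then $$d_{TV}\big(\mathcal L(W_{\mathrm{RR}},W_{\mathrm{CC}},W_{\mathrm{RC}},W_{\mathrm{CR}}),\ \mathcal L(S_{\mathrm{RR}},S_{\mathrm{CC}},S_{\mathrm{RC}},S_{\mathrm{CR}})\big)\le d.$$ In particular both distances are $O\big((n-k)^3/n^2\big)$.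
   Context: The board is $B_n=\{(i,j):1\le i<j\le n\}$; a square $(i,j)$ has row $i$ and column $j$; $|B_n|=\binom n2$. Place $r$ distinguishable rooks, labelled $1,\dots,r$, independently and each uniformly at random on $B_n$ (several rooks may occupy the same square). The index set is $I=\{(\{a,b\},s):1\le a<b\le r,\ s\in\{\mathrm{RR},\mathrm{CC},\mathrm{RC},\mathrm{CR}\}\}$, and $I_s$ is the set of indices with mark $s$. For $\alpha=(\{a,b\},s)$ with $a<b$, $X_\alpha$ is the indicator that: rooks $a,b$ are in the same row ($s=\mathrm{RR}$); rooks $a,b$ are in the same column ($s=\mathrm{CC}$); the column number of rook $a$ equals the row number of rook $b$ ($s=\mathrm{RC}$); the row number of rook $a$ equals the column number of rook $b$ ($s=\mathrm{CR}$). The family $(X_\alpha)_{\alpha\in I}$ is the rook coincidence process. $d_{TV}$ denotes total variation distance between distributions. *)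

theory Defs
  imports "HOL-Probability.Probability"
begin

text \<open>The board B_n = {(i,j). 1 <= i < j <= n}; a square (i,j) has row i and column j.\<close>
definition board :: "nat \<Rightarrow> (nat \<times> nat) set" where
  "board n = {(i, j). 1 \<le> i \<and> i < j \<and> j \<le> n}"

definition rook_config :: "nat \<Rightarrow> nat \<Rightarrow> (nat \<Rightarrow> nat \<times> nat) pmf" where
  "rook_config n r = pmf_of_set (PiE {1..r} (\<lambda>_. board n))"

datatype mark = RR | CC | RC | CR

text \<open>Index set I: an unordered pair {a,b} with a<b is represented by the pair (a,b).\<close>
definition rook_index :: "nat \<Rightarrow> ((nat \<times> nat) \<times> mark) set" where
  "rook_index r = {((a, b), s). 1 \<le> a \<and> a < b \<and> b \<le> r}"

definition rook_index_mark :: "nat \<Rightarrow> mark \<Rightarrow> ((nat \<times> nat) \<times> mark) set" where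
  "rook_index_mark r s = {\<alpha> \<in> rook_index r. snd \<alpha> = s}"

fun coinc :: "(nat \<Rightarrow> nat \<times> nat) \<Rightarrow> (nat \<times> nat) \<times> mark \<Rightarrow> nat" where
  "coinc w ((a, b), RR) = (if fst (w a) = fst (w b) then 1 else 0)"
| "coinc w ((a, b), CC) = (if snd (w a) = snd (w b) then 1 else 0)"
| "coinc w ((a, b), RC) = (if snd (w a) = fst (w b) then 1 else 0)"
| "coinc w ((a, b), CR) = (if fst (w a) = snd (w b) then 1 else 0)"

definition pois :: "real \<Rightarrow> nat pmf" where
  "pois m = (if m \<le> 0 then return_pmf 0 else poisson_pmf m)"

definition dTV :: "'a pmf \<Rightarrow> 'a pmf \<Rightarrow> real" where
  "dTV p q = (SUP A. \<bar>measure_pmf.prob p A - measure_pmf.prob q A\<bar>)"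

definition rook_bound :: "nat \<Rightarrow> nat \<Rightarrow> real" where
  "rook_bound n r = real r * (real r - 1) * (real r - 3/2) * (362 / (9 * (real n)^2))
      * ((real n * (real n - 301/181) + 166) / (real n - 1)^2)"

end

theory Submission
  imports Defs
begin

lemma pmf_bounded_integrable:
  fixes f :: "'a \<Rightarrow> real"
  assumes "\<And>x. \<bar>f x\<bar> \<le> C"
  shows "integrable (measure_pmf p) f"
  by (rule measure_pmf.integrable_const_bound[where B=C]) (use assms in auto)

lemma pois_pos: "0 < m \<Longrightarrow> pois m = poisson_pmf m"
  by (simp add: pois_def)

lemma exp_split3:
  fixes u :: "nat \<Rightarrow> real" and m :: real
  assumes m: "0 < m" and ub: "\<And>v. 0 \<le> u v" "\<And>v. u v \<le> 1"
  shows "measure_pmf.expectation (poisson_pmf m) u = exp (-m) * u 0 + m * exp (-m) * u 1 +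
           measure_pmf.expectation (poisson_pmf m) (\<lambda>v. if 2 \<le> v then u v else 0)"
    and "measure_pmf.expectation (poisson_pmf m) (\<lambda>v. if 2 \<le> v then 1 else 0::real) = 1 - exp (-m) - m * exp (-m)"
    and "0 \<le> measure_pmf.expectation (poisson_pmf m) (\<lambda>v. if 2 \<le> v then u v else 0)"
    and "measure_pmf.expectation (poisson_pmf m) (\<lambda>v. if 2 \<le> v then u v else 0) \<le> 
         measure_pmf.expectation (poisson_pmf m) (\<lambda>v. if 2 \<le> v then 1 else 0::real)"
proof -
  let ?E = "measure_pmf.expectation (poisson_pmf m)"
  have i: "integrable (poisson_pmf m) g" if "\<And>x. \<bar>g x\<bar> \<le> 1" for g :: "nat \<Rightarrow> real"
    by (rule pmf_bounded_integrable[where C=1]) (use that in auto)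
  have gen: "?E g = exp (-m) * g 0 + m * exp (-m) * g 1 + ?E (\<lambda>v. if 2 \<le> v then g v else 0)"
    if g: "\<And>v. \<bar>g v\<bar> \<le> 1" for g :: "nat \<Rightarrow> real"
  proof -
    have dec: "g = (\<lambda>v. (indicator {0} v * g 0 + indicator {1} v * g 1) + (if 2 \<le> v then g v else 0))"
      by (auto simp: fun_eq_iff indicator_def) (metis less_2_cases not_le)
    have i1: "integrable (poisson_pmf m) (\<lambda>v. indicator {0} v * g 0 :: real)"
      by (rule i) (use g in \<open>auto simp: indicator_def\<close>)
    have i2: "integrable (poisson_pmf m) (\<lambda>v. indicator {1} v * g 1 :: real)"
      by (rule i) (use g in \<open>auto simp: indicator_def\<close>)
    have i3: "integrable (poisson_pmf m) (\<lambda>v. if 2 \<le> v then g v else 0)"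
      by (rule i) (use g in \<open>auto\<close>)
    have "?E g = ?E (\<lambda>v. (indicator {0} v * g 0 + indicator {1} v * g 1) + (if 2 \<le> v then g v else 0))"
      by (subst dec) (rule refl)
    also have "\<dots> = ?E (\<lambda>v. indicator {0} v * g 0 + indicator {1} v * g 1) + ?E (\<lambda>v. if 2 \<le> v then g v else 0)"
      by (rule Bochner_Integration.integral_add[OF Bochner_Integration.integrable_add[OF i1 i2] i3])
    also have "?E (\<lambda>v. indicator {0} v * g 0 + indicator {1} v * g 1) = ?E (\<lambda>v. indicator {0} v * g 0) + ?E (\<lambda>v. indicator {1} v * g 1)"
      by (rule Bochner_Integration.integral_add[OF i1 i2])
    also have "?E (\<lambda>v. indicator {0} v * g 0) = exp (-m) * g 0"
      using m by (simp add: measure_pmf_single)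
    also have "?E (\<lambda>v. indicator {1} v * g 1) = m * exp (-m) * g 1"
      using m by (simp add: measure_pmf_single)
    finally show ?thesis .
  qed
  show "?E u = exp (-m) * u 0 + m * exp (-m) * u 1 + ?E (\<lambda>v. if 2 \<le> v then u v else 0)"
    by (rule gen) (use ub in \<open>auto simp: abs_le_iff intro: order_trans[of _ 0]\<close>)
  have "1 = ?E (\<lambda>v. 1::real)" by simp
  also have "\<dots> = exp (-m) + m * exp (-m) + ?E (\<lambda>v. if 2 \<le> v then 1 else 0::real)"
    using gen[of "\<lambda>v. 1"] by simp
  finally show "?E (\<lambda>v. if 2 \<le> v then 1 else 0::real) = 1 - exp (-m) - m * exp (-m)" by simp
  show "0 \<le> ?E (\<lambda>v. if 2 \<le> v then u v else 0)" by (rule Bochner_Integration.integral_nonneg) (use ub in auto)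
  show "?E (\<lambda>v. if 2 \<le> v then u v else 0) \<le> ?E (\<lambda>v. if 2 \<le> v then 1 else 0::real)"
    by (rule Bochner_Integration.integral_mono) (use ub in \<open>auto intro!: i simp: abs_le_iff intro: order_trans[of _ 0]\<close>)
qed

lemma stein_bounds:
  fixes u :: "nat \<Rightarrow> real" and m :: real
  assumes m: "0 < m" "m \<le> 1" and ub: "\<And>v. 0 \<le> u v" "\<And>v. u v \<le> 1"
  defines "U \<equiv> measure_pmf.expectation (poisson_pmf m) u"
  shows "\<bar>u 0 - U\<bar> \<le> m" and "\<bar>m * (u 1 - U) + (u 0 - U)\<bar> \<le> m^2"
proof -
  define R where "R = measure_pmf.expectation (poisson_pmf m) (\<lambda>v. if 2 \<le> v then u v else 0)"
  define e where "e = exp (-m)"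
  define q2 where "q2 = measure_pmf.expectation (poisson_pmf m) (\<lambda>v. if 2 \<le> v then 1 else 0::real)"
  note sp = exp_split3[of m u, OF m(1) ub, folded R_def q2_def e_def]
  have U: "U = e * u 0 + m * e * u 1 + R" using sp(1) unfolding U_def .
  have q2: "q2 = 1 - e - m * e" using sp(2) .
  have R: "0 \<le> R" "R \<le> q2" using sp(3,4) by auto
  have e0: "0 < e" unfolding e_def by simp
  have e1: "1 - m \<le> e" unfolding e_def using exp_ge_add_one_self[of "-m"] by simp
  have u0: "0 \<le> u 0" "u 0 \<le> 1" "0 \<le> u 1" "u 1 \<le> 1" using ub by auto
  have me: "0 \<le> m * e" using m e0 by simp
  have h1: "e * u 0 + m * e * u 0 + q2 * u 0 = u 0"
  proof -
    have "(e + m * e + q2) * u 0 = u 0" using q2 by simp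
    thus ?thesis by (simp only: distrib_right)
  qed
  have "u 0 - U = m * e * u 0 + q2 * u 0 - m * e * u 1 - R"
    using U h1 by linarith
  moreover have "u 0 * (m * e + q2) = m * e * u 0 + q2 * u 0" by (simp only: distrib_left mult.commute)
  ultimately have "u 0 - U = u 0 * (m * e + q2) - m * e * u 1 - R" by simp
  moreover have "u 0 * (m * e + q2) \<le> m * e + q2" using u0 me R by (simp add: mult_left_le_one_le)
  moreover have "m * e * u 1 \<le> m * e" using u0 me by (simp add: mult_left_le)
  moreover have "0 \<le> u 0 * (m * e + q2)" using u0 me R by simp
  moreover have "0 \<le> m * e * u 1" using u0 me by simp
  ultimately have "\<bar>u 0 - U\<bar> \<le> m * e + q2" using R by (simp add: abs_le_iff)
  also have "m * e + q2 = 1 - e" using q2 by simp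
  also have "\<dots> \<le> m" using e1 by simp
  finally show "\<bar>u 0 - U\<bar> \<le> m" .
  define S where "S = e * u 0 + m * e * u 1"
  define q where "q = e + m * e"
  have S: "0 \<le> S" "S \<le> q" unfolding S_def q_def using u0 me e0
    by (auto intro!: add_mono mult_left_le_one_le mult_left_le simp: mult_left_le)
  have q: "q2 = 1 - q" unfolding q_def using q2 by simp
  have G: "m * (u 1 - U) + (u 0 - U) = exp m * (S * (1 - q) - q * R)"
  proof -
    have c: "exp m * e = 1" unfolding e_def by (simp add: exp_minus)
    have cS: "exp m * S = u 0 + m * u 1" unfolding S_def using c by algebra
    have cq: "exp m * q = 1 + m" unfolding q_def using c by algebra
    have "exp m * (S * (1 - q) - q * R) = exp m * S - (exp m * S) * q - (exp m * q) * R" by algebra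
    also have "\<dots> = (u 0 + m * u 1) - (u 0 + m * u 1) * q - (1 + m) * R" unfolding cS cq ..
    also have "\<dots> = m * (u 1 - U) + (u 0 - U)" unfolding U q_def S_def by algebra
    finally show ?thesis by simp
  qed
  have q01: "0 \<le> q" "q \<le> 1" using S R q by auto
  have "S * (1 - q) \<le> q * (1 - q)" using S q01 by (intro mult_right_mono) auto
  moreover have "q * R \<le> q * (1 - q)" using R q q01 by (intro mult_left_mono) auto
  moreover have "0 \<le> S * (1 - q)" "0 \<le> q * R" using S q01 R by auto
  ultimately have "\<bar>S * (1 - q) - q * R\<bar> \<le> q * (1 - q)" by (simp add: abs_le_iff)
  also have "\<dots> \<le> 1 - q" using q01 by (simp add: mult_left_le_one_le)
  finally have "\<bar>S * (1 - q) - q * R\<bar> \<le> 1 - q" .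
  hence "\<bar>m * (u 1 - U) + (u 0 - U)\<bar> \<le> exp m * (1 - q)"
    unfolding G abs_mult by (simp add: mult_left_mono)
  also have "exp m * (1 - q) = exp m - 1 - m"
  proof -
    have c: "exp m * e = 1" unfolding e_def by (simp add: exp_minus)
    show ?thesis unfolding q_def using c by algebra
  qed
  also have "\<dots> \<le> m^2" using exp_bound[of m] m by simp
  finally show "\<bar>m * (u 1 - U) + (u 0 - U)\<bar> \<le> m^2" .
qed


lemma E_pair_nonneg:
  fixes h :: "'a \<times> 'b \<Rightarrow> real"
  assumes "\<And>x. 0 \<le> h x" "\<And>x. h x \<le> C"
  shows "measure_pmf.expectation (pair_pmf A B) h =
         measure_pmf.expectation A (\<lambda>a. measure_pmf.expectation B (\<lambda>b. h (a, b)))"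
proof -
  have C: "0 \<le> C" using assms(1)[of undefined] assms(2)[of undefined] by simp
  have ih: "integrable (measure_pmf M) g" if "\<And>x. \<bar>g x\<bar> \<le> C" for M and g :: "'c \<Rightarrow> real"
    by (rule pmf_bounded_integrable[where C=C]) (use that in auto)
  have hb: "\<bar>h x\<bar> \<le> C" for x using assms[of x] by simp
  have inner: "(\<integral>\<^sup>+b. ennreal (h (a, b)) \<partial>B) = ennreal (measure_pmf.expectation B (\<lambda>b. h (a, b)))" for a
    by (rule nn_integral_eq_integral) (use hb assms in \<open>auto intro!: ih\<close>)
  have innb: "\<bar>measure_pmf.expectation B (\<lambda>b. h (a, b))\<bar> \<le> C" for a
  proof -
    have "measure_pmf.expectation B (\<lambda>b. h (a, b)) \<le> measure_pmf.expectation B (\<lambda>b. C)"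
      by (rule Bochner_Integration.integral_mono) (use hb assms in \<open>auto intro!: ih\<close>)
    moreover have "0 \<le> measure_pmf.expectation B (\<lambda>b. h (a, b))"
      by (rule Bochner_Integration.integral_nonneg) (use assms in auto)
    ultimately show ?thesis by simp
  qed
  have "measure_pmf.expectation (pair_pmf A B) h = enn2real (\<integral>\<^sup>+x. ennreal (h x) \<partial>pair_pmf A B)"
    by (rule integral_eq_nn_integral) (use hb assms in \<open>auto intro!: ih\<close>)
  also have "(\<integral>\<^sup>+x. ennreal (h x) \<partial>pair_pmf A B) = (\<integral>\<^sup>+a. \<integral>\<^sup>+b. ennreal (h (a, b)) \<partial>B \<partial>A)"
    by (rule nn_integral_pair_pmf')
  also have "\<dots> = (\<integral>\<^sup>+a. ennreal (measure_pmf.expectation B (\<lambda>b. h (a, b))) \<partial>A)"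
    by (simp add: inner)
  also have "\<dots> = ennreal (measure_pmf.expectation A (\<lambda>a. measure_pmf.expectation B (\<lambda>b. h (a, b))))"
    by (rule nn_integral_eq_integral) (use innb assms in \<open>auto intro!: ih Bochner_Integration.integral_nonneg\<close>)
  also have "enn2real \<dots> = measure_pmf.expectation A (\<lambda>a. measure_pmf.expectation B (\<lambda>b. h (a, b)))"
    by (rule enn2real_ennreal) (use assms in \<open>auto intro!: Bochner_Integration.integral_nonneg\<close>)
  finally show ?thesis .
qed

lemma E_pair:
  fixes h :: "'a \<times> 'b \<Rightarrow> real"
  assumes "\<And>x. \<bar>h x\<bar> \<le> C"
  shows "measure_pmf.expectation (pair_pmf A B) h =
         measure_pmf.expectation A (\<lambda>a. measure_pmf.expectation B (\<lambda>b. h (a, b)))"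
proof -
  define g where "g x = h x + C" for x
  have g: "0 \<le> g x" "g x \<le> 2 * C" for x using assms[of x] unfolding g_def by (auto simp: abs_le_iff)
  have hg: "h = (\<lambda>x. g x - C)" unfolding g_def by auto
  have ig: "integrable (measure_pmf M) (\<lambda>x. f x)" if "\<And>x. \<bar>f x\<bar> \<le> D" for M and f :: "'c \<Rightarrow> real" and D
    by (rule pmf_bounded_integrable[where C=D]) (use that in auto)
  have gb: "\<bar>g x\<bar> \<le> 2 * C" for x using g[of x] by simp
  have innb: "\<bar>measure_pmf.expectation B (\<lambda>b. g (a, b))\<bar> \<le> 2 * C" for a
  proof -
    have "measure_pmf.expectation B (\<lambda>b. g (a, b)) \<le> measure_pmf.expectation B (\<lambda>b. 2 * C)"
      by (rule Bochner_Integration.integral_mono) (use g gb in \<open>auto intro!: ig\<close>)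
    moreover have "0 \<le> measure_pmf.expectation B (\<lambda>b. g (a, b))"
      by (rule Bochner_Integration.integral_nonneg) (use g in auto)
    ultimately show ?thesis by simp
  qed
  have "measure_pmf.expectation (pair_pmf A B) h = measure_pmf.expectation (pair_pmf A B) g - C"
    unfolding hg by (subst Bochner_Integration.integral_diff) (use gb in \<open>auto intro!: ig\<close>)
  also have "\<dots> = measure_pmf.expectation A (\<lambda>a. measure_pmf.expectation B (\<lambda>b. g (a, b))) - C"
    using E_pair_nonneg[of g "2 * C"] g by simp
  also have "\<dots> = measure_pmf.expectation A (\<lambda>a. measure_pmf.expectation B (\<lambda>b. g (a, b)) - C)"
    by (subst Bochner_Integration.integral_diff) (use innb in \<open>auto intro!: ig\<close>)
  also have "\<dots> = measure_pmf.expectation A (\<lambda>a. measure_pmf.expectation B (\<lambda>b. h (a, b)))"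
    unfolding hg by (intro Bochner_Integration.integral_cong refl, subst Bochner_Integration.integral_diff)
       (use gb in \<open>auto intro!: ig\<close>)
  finally show ?thesis .
qed


definition merge :: "'i set \<Rightarrow> ('i \<Rightarrow> nat) \<Rightarrow> ('i \<Rightarrow> nat) \<Rightarrow> 'i \<Rightarrow> nat" where
  "merge J x y = (\<lambda>\<alpha>. if \<alpha> \<in> J then x \<alpha> else y \<alpha>)"

locale stein_setup =
  fixes P :: "'w pmf" and I :: "'i set" and X :: "'w \<Rightarrow> 'i \<Rightarrow> nat" and B :: "'i \<Rightarrow> 'i set"
    and lam :: "'i \<Rightarrow> real" and A :: "('i \<Rightarrow> nat) set"
  assumes finP: "finite (set_pmf P)" and finI: "finite I"
  and X01: "\<And>w j. X w j \<le> 1" and Xout: "\<And>w j. j \<notin> I \<Longrightarrow> X w j = 0"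
  and lam: "\<And>j. lam j = measure_pmf.expectation P (\<lambda>w. real (X w j))"
  and Bsym: "\<And>j \<beta>. j \<in> I \<Longrightarrow> \<beta> \<in> I \<Longrightarrow> \<beta> \<in> B j \<longleftrightarrow> j \<in> B \<beta>"
  and indep: "\<And>j g C. j \<in> I \<Longrightarrow> (\<And>z. \<bar>g z\<bar> \<le> C) \<Longrightarrow>
      measure_pmf.expectation P (\<lambda>w. real (X w j) * g (\<lambda>\<beta>. if \<beta> \<in> B j then 0 else X w \<beta>)) =
      lam j * measure_pmf.expectation P (\<lambda>w. g (\<lambda>\<beta>. if \<beta> \<in> B j then 0 else X w \<beta>))"
begin

definition Es :: "('w \<Rightarrow> real) \<Rightarrow> real" where
  "Es f = (\<Sum>w\<in>set_pmf P. pmf P w * f w)"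

lemma E_Es: "measure_pmf.expectation P f = Es f"
  unfolding Es_def by (subst integral_measure_pmf_real[OF finP]) (auto simp: mult.commute)

lemma Es_add: "Es (\<lambda>w. f w + g w) = Es f + Es g"
  unfolding Es_def by (simp add: sum.distrib distrib_left)
lemma Es_diff: "Es (\<lambda>w. f w - g w) = Es f - Es g"
  unfolding Es_def by (simp add: sum_subtractf right_diff_distrib)
lemma Es_cmult: "Es (\<lambda>w. c * f w) = c * Es f"
  unfolding Es_def by (simp add: sum_distrib_left mult_ac)
lemma Es_const: "Es (\<lambda>w. c) = c"
  unfolding Es_def by (simp add: sum_distrib_right[symmetric] sum_pmf_eq_1[OF finP] )
lemma Es_mono: "(\<And>w. w \<in> set_pmf P \<Longrightarrow> f w \<le> g w) \<Longrightarrow> Es f \<le> Es g"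
  unfolding Es_def by (intro sum_mono mult_left_mono) auto
lemma Es_abs: "\<bar>Es f\<bar> \<le> Es (\<lambda>w. \<bar>f w\<bar>)"
  unfolding Es_def by (rule order_trans[OF sum_abs]) (simp add: abs_mult)
lemma Es_sum: "finite K \<Longrightarrow> Es (\<lambda>w. \<Sum>k\<in>K. f k w) = (\<Sum>k\<in>K. Es (f k))"
  unfolding Es_def by (simp add: sum_distrib_left sum.swap[of _ K])
lemma Es_abs_le: "(\<And>w. w \<in> set_pmf P \<Longrightarrow> \<bar>f w\<bar> \<le> g w) \<Longrightarrow> \<bar>Es f\<bar> \<le> Es g"
  by (rule order_trans[OF Es_abs Es_mono]) auto

lemma lam_Es: "lam j = Es (\<lambda>w. real (X w j))" using lam E_Es by simp

lemma lam_nonneg: "0 \<le> lam j" unfolding lam_Es Es_def by (intro sum_nonneg) auto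
lemma lam_le1: "lam j \<le> 1"
proof -
  have "lam j \<le> Es (\<lambda>w. 1)" unfolding lam_Es by (rule Es_mono) (use X01 in auto)
  thus ?thesis by (simp add: Es_const)
qed

abbreviation Ypi :: "'i set \<Rightarrow> ('i \<Rightarrow> nat) pmf" where
  "Ypi K \<equiv> Pi_pmf K 0 (\<lambda>\<alpha>. pois (lam \<alpha>))"

definition hJ :: "'i set \<Rightarrow> ('i \<Rightarrow> nat) \<Rightarrow> real" where
  "hJ J x = measure_pmf.expectation (Ypi (I - J)) (\<lambda>y. indicator A (merge J x y))"

lemma hJ_bounds: "0 \<le> hJ J x" "hJ J x \<le> 1"
proof -
  show "0 \<le> hJ J x" unfolding hJ_def by (rule Bochner_Integration.integral_nonneg) auto
  have "hJ J x \<le> measure_pmf.expectation (Ypi (I - J)) (\<lambda>y. 1)" unfolding hJ_def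
    by (rule Bochner_Integration.integral_mono) (auto intro!: pmf_bounded_integrable[where C=1] simp: indicator_def)
  thus "hJ J x \<le> 1" by simp
qed

lemma hJ_local: "(\<And>\<alpha>. \<alpha> \<in> J \<Longrightarrow> x \<alpha> = x' \<alpha>) \<Longrightarrow> hJ J x = hJ J x'"
  unfolding hJ_def merge_def by (intro Bochner_Integration.integral_cong refl) (auto intro!: arg_cong[where f="indicator A"])

lemma hJ_step:
  assumes "j \<in> I" "j \<notin> J"
  shows "hJ J x = measure_pmf.expectation (pois (lam j)) (\<lambda>v. hJ (insert j J) (x(j := v)))"
proof -
  have fin: "finite (I - insert j J)" using finI by simp
  have IJ: "I - J = insert j (I - insert j J)" using assms by auto
  have "hJ J x = measure_pmf.expectation (map_pmf (\<lambda>(v, f). f(j := v)) (pair_pmf (pois (lam j)) (Ypi (I - insert j J))))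
                   (\<lambda>y. indicator A (merge J x y))"
    unfolding hJ_def IJ by (subst Pi_pmf_insert[OF fin]) auto
  also have "\<dots> = measure_pmf.expectation (pair_pmf (pois (lam j)) (Ypi (I - insert j J)))
                   (\<lambda>p. indicator A (merge J x ((snd p)(j := fst p))))"
    by (simp add: case_prod_unfold)
  also have "\<dots> = measure_pmf.expectation (pois (lam j)) (\<lambda>v. measure_pmf.expectation (Ypi (I - insert j J))
                   (\<lambda>f. indicator A (merge J x (f(j := v)))))"
    by (rule E_pair[where C=1 and h="\<lambda>p. indicator A (merge J x ((snd p)(j := fst p)))", simplified])
  also have "\<dots> = measure_pmf.expectation (pois (lam j)) (\<lambda>v. hJ (insert j J) (x(j := v)))"
    unfolding hJ_def
    by (intro Bochner_Integration.integral_cong refl arg_cong[where f="indicator A"])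
       (use assms in \<open>auto simp: merge_def fun_eq_iff\<close>)
  finally show ?thesis .
qed

lemma Es_cong: "(\<And>w. w \<in> set_pmf P \<Longrightarrow> f w = g w) \<Longrightarrow> Es f = Es g"
  unfolding Es_def by (intro sum.cong) auto

lemma step_bound:
  assumes j: "j \<in> I" "j \<notin> J" "J \<subseteq> I"
  shows "\<bar>Es (\<lambda>w. hJ (insert j J) (X w)) - Es (\<lambda>w. hJ J (X w))\<bar>
           \<le> 2 * lam j ^ 2 + 2 * (\<Sum>\<beta>\<in>J \<inter> B j. lam j * lam \<beta> + Es (\<lambda>w. real (X w j) * real (X w \<beta>)))"
proof -
  define m where "m = lam j"
  define u where "u x v = hJ (insert j J) (x(j:=v))" for x v
  define Uf where "Uf x = measure_pmf.expectation (pois m) (u x)" for x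
  have finJ: "finite J" using j finI finite_subset by blast
  have hJJ: "hJ J x = Uf x" for x unfolding Uf_def u_def m_def using hJ_step[OF j(1,2)] by simp
  have hJI: "hJ (insert j J) x = u x (x j)" for x unfolding u_def by simp
  have diff: "Es (\<lambda>w. hJ (insert j J) (X w)) - Es (\<lambda>w. hJ J (X w)) = Es (\<lambda>w. u (X w) (X w j) - Uf (X w))"
    unfolding hJJ hJI Es_diff ..
  have S_nonneg: "0 \<le> (\<Sum>\<beta>\<in>J \<inter> B j. lam j * lam \<beta> + Es (\<lambda>w. real (X w j) * real (X w \<beta>)))"
    by (intro sum_nonneg add_nonneg_nonneg mult_nonneg_nonneg lam_nonneg) (auto simp: Es_def intro!: sum_nonneg)
  show ?thesis
  proof (cases "m = 0")
    case True
    have X0: "X w j = 0" if "w \<in> set_pmf P" for w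
    proof -
      have "(\<Sum>w\<in>set_pmf P. pmf P w * real (X w j)) = 0" using True lam_Es[of j] unfolding m_def Es_def by simp
      hence "\<forall>w\<in>set_pmf P. pmf P w * real (X w j) = 0" using finP by (subst (asm) sum_nonneg_eq_0_iff) auto
      thus ?thesis using that by (auto simp: set_pmf_iff)
    qed
    have "Es (\<lambda>w. u (X w) (X w j) - Uf (X w)) = Es (\<lambda>w. 0)"
      by (rule Es_cong) (simp add: X0 Uf_def True pois_def)
    thus ?thesis unfolding diff using S_nonneg by (simp add: Es_const)
  next
    case False
    have m0: "0 < m" using False lam_nonneg[of j] unfolding m_def by simp
    have m1: "m \<le> 1" unfolding m_def by (rule lam_le1)
    have pm: "pois m = poisson_pmf m" using m0 by (simp add: pois_def)
    have ub: "0 \<le> u x v" "u x v \<le> 1" for x v unfolding u_def by (rule hJ_bounds)+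
    define F1 where "F1 x = (u x 0 - Uf x) / m" for x
    define F2 where "F2 x = (u x 1 - Uf x + F1 x) / m" for x
    define G where "G x = (if x j = 0 then F1 x else F2 x)" for x
    have sb1: "\<bar>u x 0 - Uf x\<bar> \<le> m" and sb2: "\<bar>m * (u x 1 - Uf x) + (u x 0 - Uf x)\<bar> \<le> m^2" for x
      using stein_bounds[of m "u x", OF m0 m1] ub unfolding Uf_def pm by auto
    have F1b: "\<bar>F1 x\<bar> \<le> 1" for x
      unfolding F1_def using sb1[of x] m0 by (simp add: abs_divide divide_le_eq_1)
    have F2b: "\<bar>F2 x\<bar> \<le> 1" for x
    proof -
      have "F2 x = (m * (u x 1 - Uf x) + (u x 0 - Uf x)) / m^2"
        unfolding F2_def F1_def using m0 by (simp add: field_simps power2_eq_square)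
      thus ?thesis using sb2[of x] m0 by (simp add: abs_divide divide_le_eq_1)
    qed
    have Gb: "\<bar>G x - F1 x\<bar> \<le> 2 * real (x j)" for x
      using F1b[of x] F2b[of x] unfolding G_def by (cases "x j") auto
    have loc: "F1 x = F1 x'" if "\<And>\<alpha>. \<alpha> \<in> J \<Longrightarrow> x \<alpha> = x' \<alpha>" for x x'
    proof -
      have "u x = u x'" unfolding u_def by (intro ext hJ_local) (use that in auto)
      thus ?thesis unfolding F1_def Uf_def by simp
    qed
    have key: "u x (x j) - Uf x = m * G x - real (x j) * F1 x" if "x j \<le> 1" for x
    proof (cases "x j = 0")
      case True thus ?thesis unfolding G_def F1_def using m0 by simp
    next
      case False
      hence "x j = 1" using that by simp
      thus ?thesis unfolding G_def F2_def using m0 by (simp add: field_simps)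
    qed
    define Z where "Z w = (\<lambda>\<beta>. if \<beta> \<in> B j then 0 else X w \<beta>)" for w
    define SX where "SX w = (\<Sum>\<beta>\<in>J \<inter> B j. real (X w \<beta>))" for w
    have SX0: "0 \<le> SX w" for w unfolding SX_def by (rule sum_nonneg) auto
    have Zb: "\<bar>F1 (X w) - F1 (Z w)\<bar> \<le> 2 * SX w" for w
    proof (cases "\<forall>\<beta>\<in>J \<inter> B j. X w \<beta> = 0")
      case True
      have "F1 (X w) = F1 (Z w)" by (rule loc) (use True in \<open>auto simp: Z_def\<close>)
      thus ?thesis using SX0[of w] by simp
    next
      case False
      then obtain \<beta> where b: "\<beta> \<in> J \<inter> B j" "X w \<beta> \<noteq> 0" by auto
      have "1 \<le> real (X w \<beta>)" using b by simp
      also have "\<dots> \<le> SX w" unfolding SX_def by (rule member_le_sum) (use b finJ in auto)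
      finally show ?thesis using F1b[of "X w"] F1b[of "Z w"] by simp
    qed
    have ind: "Es (\<lambda>w. real (X w j) * F1 (Z w)) = m * Es (\<lambda>w. F1 (Z w))"
      using indep[OF j(1), of F1 1] F1b unfolding E_Es Z_def m_def by simp
    have "Es (\<lambda>w. u (X w) (X w j) - Uf (X w)) = Es (\<lambda>w. m * G (X w) - real (X w j) * F1 (X w))"
      by (rule Es_cong) (rule key, rule X01)
    also have "\<dots> = Es (\<lambda>w. m * (G (X w) - F1 (X w)) + m * (F1 (X w) - F1 (Z w)) + (real (X w j) * (F1 (Z w) - F1 (X w)))
                     + (m * F1 (Z w) - real (X w j) * F1 (Z w)))"
      by (rule Es_cong) (simp add: algebra_simps)
    also have "\<dots> = m * Es (\<lambda>w. G (X w) - F1 (X w)) + m * Es (\<lambda>w. F1 (X w) - F1 (Z w))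
                  + Es (\<lambda>w. real (X w j) * (F1 (Z w) - F1 (X w)))"
      by (simp only: Es_add Es_diff Es_cmult ind)
    finally have eq: "Es (\<lambda>w. u (X w) (X w j) - Uf (X w)) = \<dots>" .
    have b1: "\<bar>Es (\<lambda>w. G (X w) - F1 (X w))\<bar> \<le> 2 * m"
    proof -
      have "\<bar>Es (\<lambda>w. G (X w) - F1 (X w))\<bar> \<le> Es (\<lambda>w. 2 * real (X w j))" by (rule Es_abs_le) (rule Gb)
      also have "\<dots> = 2 * m" unfolding Es_cmult m_def lam_Es ..
      finally show ?thesis .
    qed
    have b2: "\<bar>Es (\<lambda>w. F1 (X w) - F1 (Z w))\<bar> \<le> 2 * (\<Sum>\<beta>\<in>J \<inter> B j. lam \<beta>)"
    proof -
      have "\<bar>Es (\<lambda>w. F1 (X w) - F1 (Z w))\<bar> \<le> Es (\<lambda>w. 2 * SX w)" by (rule Es_abs_le) (rule Zb)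
      also have "\<dots> = 2 * (\<Sum>\<beta>\<in>J \<inter> B j. lam \<beta>)" unfolding Es_cmult SX_def
        by (subst Es_sum) (use finJ in \<open>auto simp: lam_Es\<close>)
      finally show ?thesis .
    qed
    have b3: "\<bar>Es (\<lambda>w. real (X w j) * (F1 (Z w) - F1 (X w)))\<bar> \<le> 2 * (\<Sum>\<beta>\<in>J \<inter> B j. Es (\<lambda>w. real (X w j) * real (X w \<beta>)))"
    proof -
      have "\<bar>Es (\<lambda>w. real (X w j) * (F1 (Z w) - F1 (X w)))\<bar> \<le> Es (\<lambda>w. 2 * (real (X w j) * SX w))"
      proof (rule Es_abs_le)
        fix w
        have "\<bar>real (X w j) * (F1 (Z w) - F1 (X w))\<bar> = real (X w j) * \<bar>F1 (X w) - F1 (Z w)\<bar>"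
          by (simp add: abs_mult abs_minus_commute)
        also have "\<dots> \<le> real (X w j) * (2 * SX w)" by (rule mult_left_mono[OF Zb]) simp
        finally show "\<bar>real (X w j) * (F1 (Z w) - F1 (X w))\<bar> \<le> 2 * (real (X w j) * SX w)" by simp
      qed
      also have "\<dots> = 2 * (\<Sum>\<beta>\<in>J \<inter> B j. Es (\<lambda>w. real (X w j) * real (X w \<beta>)))"
        unfolding Es_cmult SX_def sum_distrib_left
        by (subst Es_sum) (use finJ in \<open>auto simp: Es_cmult\<close>)
      finally show ?thesis .
    qed
    have "\<bar>Es (\<lambda>w. u (X w) (X w j) - Uf (X w))\<bar> \<le> m * (2 * m) + m * (2 * (\<Sum>\<beta>\<in>J \<inter> B j. lam \<beta>))
            + 2 * (\<Sum>\<beta>\<in>J \<inter> B j. Es (\<lambda>w. real (X w j) * real (X w \<beta>)))"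
    proof -
      have t: "\<bar>x + y + z\<bar> \<le> \<bar>x\<bar> + \<bar>y\<bar> + \<bar>z\<bar>" for x y z :: real by linarith
      have a1: "\<bar>m * Es (\<lambda>w. G (X w) - F1 (X w))\<bar> \<le> m * (2 * m)"
        unfolding abs_mult using b1 m0 by (intro mult_mono) auto
      have a2: "\<bar>m * Es (\<lambda>w. F1 (X w) - F1 (Z w))\<bar> \<le> m * (2 * (\<Sum>\<beta>\<in>J \<inter> B j. lam \<beta>))"
        unfolding abs_mult using b2 m0 by (intro mult_mono) auto
      show ?thesis unfolding eq using t a1 a2 b3 by (meson add_mono order_trans)
    qed
    also have "\<dots> = 2 * lam j ^ 2 + 2 * (\<Sum>\<beta>\<in>J \<inter> B j. lam j * lam \<beta> + Es (\<lambda>w. real (X w j) * real (X w \<beta>)))"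
      unfolding m_def sum.distrib sum_distrib_left power2_eq_square by (simp add: distrib_left sum_distrib_left[symmetric] mult.left_commute)
    finally show ?thesis unfolding diff .
  qed
qed

definition sJ :: "'i \<Rightarrow> 'i \<Rightarrow> real" where
  "sJ k \<beta> = lam k * lam \<beta> + Es (\<lambda>w. real (X w k) * real (X w \<beta>))"

definition RB :: "'i set \<Rightarrow> real" where
  "RB J = (\<Sum>k\<in>J. 2 * lam k ^ 2 + (\<Sum>\<beta>\<in>J \<inter> B k - {k}. sJ k \<beta>))"

lemma sJ_sym: "sJ k \<beta> = sJ \<beta> k"
  unfolding sJ_def by (simp add: mult.commute)

lemma RB_insert:
  assumes "finite J" "J \<subseteq> I" "j \<in> I" "j \<notin> J"
  shows "RB (insert j J) = RB J + 2 * lam j ^ 2 + 2 * (\<Sum>\<beta>\<in>J \<inter> B j. sJ j \<beta>)"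
proof -
  have e1: "insert j J \<inter> B j - {j} = J \<inter> B j" using assms by auto
  have e2: "(\<Sum>\<beta>\<in>insert j J \<inter> B k - {k}. sJ k \<beta>) = (\<Sum>\<beta>\<in>J \<inter> B k - {k}. sJ k \<beta>) + (if j \<in> B k then sJ k j else 0)"
    if "k \<in> J" for k
  proof (cases "j \<in> B k")
    case True
    hence "insert j J \<inter> B k - {k} = insert j (J \<inter> B k - {k})" using that assms by auto
    thus ?thesis using True assms by simp
  next
    case False
    hence "insert j J \<inter> B k - {k} = J \<inter> B k - {k}" by auto
    thus ?thesis using False by simp
  qed
  have e3: "(\<Sum>k\<in>J. if j \<in> B k then sJ k j else 0) = (\<Sum>\<beta>\<in>J \<inter> B j. sJ j \<beta>)"
  proof -
    have "(\<Sum>k\<in>J. if j \<in> B k then sJ k j else 0) = (\<Sum>k\<in>J. if k \<in> B j then sJ j k else 0)"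
      by (intro sum.cong refl) (use assms Bsym sJ_sym in auto)
    also have "\<dots> = (\<Sum>\<beta>\<in>J \<inter> B j. sJ j \<beta>)"
      using assms by (simp add: sum.If_cases Int_def)
    finally show ?thesis .
  qed
  have "RB (insert j J) = (2 * lam j ^ 2 + (\<Sum>\<beta>\<in>J \<inter> B j. sJ j \<beta>)) +
          (\<Sum>k\<in>J. 2 * lam k ^ 2 + (\<Sum>\<beta>\<in>insert j J \<inter> B k - {k}. sJ k \<beta>))"
    unfolding RB_def using assms by (simp add: e1)
  also have "(\<Sum>k\<in>J. 2 * lam k ^ 2 + (\<Sum>\<beta>\<in>insert j J \<inter> B k - {k}. sJ k \<beta>)) =
             RB J + (\<Sum>k\<in>J. if j \<in> B k then sJ k j else 0)"
    unfolding RB_def by (simp add: e2 sum.distrib add.assoc)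
  finally show ?thesis unfolding e3 by simp
qed

lemma induct_bound:
  assumes "J \<subseteq> I"
  shows "\<bar>Es (\<lambda>w. hJ J (X w)) - measure_pmf.prob (Ypi I) A\<bar> \<le> RB J"
proof -
  have "finite J" using assms finI finite_subset by blast
  then show ?thesis using assms
  proof (induction J rule: finite_subset_induct')
    case empty
    have "hJ {} x = measure_pmf.prob (Ypi I) A" for x
      unfolding hJ_def merge_def by simp
    thus ?case by (simp add: Es_const RB_def)
  next
    case (insert j J)
    have "\<bar>Es (\<lambda>w. hJ (insert j J) (X w)) - Es (\<lambda>w. hJ J (X w))\<bar> \<le> 2 * lam j ^ 2 + 2 * (\<Sum>\<beta>\<in>J \<inter> B j. sJ j \<beta>)"
      using step_bound[of j J] insert unfolding sJ_def by simp
    thus ?case using insert RB_insert[of J j] by linarith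
  qed
qed

theorem stein_main:
  "\<bar>measure_pmf.prob (map_pmf X P) A - measure_pmf.prob (Ypi I) A\<bar> \<le> RB I"
proof -
  have "hJ I x = indicator A (merge I x (\<lambda>_. 0))" for x unfolding hJ_def by simp
  moreover have "merge I (X w) (\<lambda>_. 0) = X w" for w unfolding merge_def using Xout by auto
  ultimately have "Es (\<lambda>w. hJ I (X w)) = Es (\<lambda>w. indicator A (X w))" by simp
  also have "\<dots> = measure_pmf.expectation (map_pmf X P) (indicator A)"
    unfolding E_Es[symmetric] by (simp only: integral_map_pmf)
  also have "\<dots> = measure_pmf.prob (map_pmf X P) A"
    by (simp only: Bochner_Integration.integral_indicator space_measure_pmf Int_UNIV_right)
  finally show ?thesis using induct_bound[of I] by simp
qed

lemma RB_expl: "RB I = (\<Sum>k\<in>I. 2 * lam k ^ 2 + (\<Sum>\<beta>\<in>I \<inter> B k - {k}. lam k * lam \<beta> +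
     measure_pmf.expectation P (\<lambda>w. real (X w k) * real (X w \<beta>))))"
  unfolding RB_def sJ_def E_Es ..

end

lemma E_pair_swap:
  fixes h :: "'a \<times> 'b \<Rightarrow> real"
  assumes "\<And>x. \<bar>h x\<bar> \<le> C"
  shows "measure_pmf.expectation (pair_pmf A B) h =
         measure_pmf.expectation B (\<lambda>b. measure_pmf.expectation A (\<lambda>a. h (a, b)))"
proof -
  have "measure_pmf.expectation (pair_pmf A B) h =
        measure_pmf.expectation (map_pmf (\<lambda>(x, y). (y, x)) (pair_pmf B A)) h"
    by (subst pair_commute_pmf) (rule refl)
  also have "\<dots> = measure_pmf.expectation (pair_pmf B A) (\<lambda>p. h (snd p, fst p))"
    by (simp add: case_prod_unfold)
  also have "\<dots> = measure_pmf.expectation B (\<lambda>b. measure_pmf.expectation A (\<lambda>a. h (a, b)))"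
    by (rule E_pair[where C=C and h="\<lambda>p. h (snd p, fst p)", simplified]) (use assms in auto)
  finally show ?thesis .
qed

lemma peel:
  fixes h :: "('a \<Rightarrow> 'b) \<Rightarrow> real"
  assumes "finite K" "c \<in> K" "\<And>x. \<bar>h x\<bar> \<le> C"
  shows "measure_pmf.expectation (Pi_pmf K d p) h =
         measure_pmf.expectation (Pi_pmf (K - {c}) d p) (\<lambda>f. measure_pmf.expectation (p c) (\<lambda>v. h (f(c := v))))"
proof -
  have K: "K = insert c (K - {c})" using assms by auto
  have "measure_pmf.expectation (Pi_pmf K d p) h =
        measure_pmf.expectation (map_pmf (\<lambda>(v, f). f(c := v)) (pair_pmf (p c) (Pi_pmf (K - {c}) d p))) h"
    by (subst K, subst Pi_pmf_insert) (use assms in auto)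
  also have "\<dots> = measure_pmf.expectation (pair_pmf (p c) (Pi_pmf (K - {c}) d p)) (\<lambda>q. h ((snd q)(c := fst q)))"
    by (simp add: case_prod_unfold)
  also have "\<dots> = measure_pmf.expectation (Pi_pmf (K - {c}) d p) (\<lambda>f. measure_pmf.expectation (p c) (\<lambda>v. h (f(c := v))))"
    by (rule E_pair_swap[where C=C and h="\<lambda>q. h ((snd q)(c := fst q))", simplified]) (use assms in auto)
  finally show ?thesis .
qed

lemma Pi_indep:
  fixes \<phi> \<psi> :: "('a \<Rightarrow> 'b) \<Rightarrow> real"
  assumes K: "finite K" "S \<subseteq> K"
    and \<phi>: "\<And>w w'. (\<And>x. x \<in> S \<Longrightarrow> w x = w' x) \<Longrightarrow> \<phi> w = \<phi> w'"
    and \<psi>: "\<And>w w'. (\<And>x. x \<in> K - S \<Longrightarrow> w x = w' x) \<Longrightarrow> \<psi> w = \<psi> w'"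
    and b: "\<And>w. \<bar>\<phi> w\<bar> \<le> Ca" "\<And>w. \<bar>\<psi> w\<bar> \<le> Cb"
  shows "measure_pmf.expectation (Pi_pmf K d p) (\<lambda>w. \<phi> w * \<psi> w) =
         measure_pmf.expectation (Pi_pmf K d p) \<phi> * measure_pmf.expectation (Pi_pmf K d p) \<psi>"
proof -
  let ?M = "\<lambda>(f, g) x. if x \<in> S then f x else g x"
  let ?Q = "pair_pmf (Pi_pmf S d p) (Pi_pmf (K - S) d p)"
  have finS: "finite S" "finite (K - S)" using K finite_subset by auto
  have KS: "Pi_pmf K d p = map_pmf ?M ?Q"
  proof -
    have "K = S \<union> (K - S)" using K by auto
    hence "Pi_pmf K d p = Pi_pmf (S \<union> (K - S)) d p" by simp
    also have "\<dots> = map_pmf ?M ?Q" by (rule Pi_pmf_union) (use finS in auto)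
    finally show ?thesis .
  qed
  have \<phi>M: "\<phi> (?M q) = \<phi> (fst q)" for q by (rule \<phi>) (auto simp: case_prod_unfold)
  have \<psi>M: "\<psi> (?M q) = \<psi> (snd q)" for q by (rule \<psi>) (auto simp: case_prod_unfold)
  have Ca: "0 \<le> Ca" using b(1)[of undefined] by simp
  have "measure_pmf.expectation (Pi_pmf K d p) (\<lambda>w. \<phi> w * \<psi> w) =
        measure_pmf.expectation ?Q (\<lambda>q. \<phi> (fst q) * \<psi> (snd q))"
    unfolding KS by (simp only: integral_map_pmf \<phi>M \<psi>M)
  also have "\<dots> = measure_pmf.expectation (Pi_pmf S d p) (\<lambda>f. measure_pmf.expectation (Pi_pmf (K - S) d p) (\<lambda>g. \<phi> f * \<psi> g))"
  proof (rule E_pair[where C="Ca * Cb" and h="\<lambda>q. \<phi> (fst q) * \<psi> (snd q)", simplified fst_conv snd_conv])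
    fix q show "\<bar>\<phi> (fst q) * \<psi> (snd q)\<bar> \<le> Ca * Cb"
      unfolding abs_mult using b Ca by (intro mult_mono) auto
  qed
  also have "\<dots> = measure_pmf.expectation (Pi_pmf S d p) (\<lambda>f. \<phi> f * measure_pmf.expectation (Pi_pmf (K - S) d p) \<psi>)"
    by (simp only: integral_mult_right_zero)
  also have "\<dots> = measure_pmf.expectation (Pi_pmf S d p) \<phi> * measure_pmf.expectation (Pi_pmf (K - S) d p) \<psi>"
    by (simp only: integral_mult_left_zero)
  also have "measure_pmf.expectation (Pi_pmf S d p) \<phi> = measure_pmf.expectation (Pi_pmf K d p) \<phi>"
    unfolding KS by (simp only: integral_map_pmf \<phi>M expectation_pair_pmf_fst)
  also have "measure_pmf.expectation (Pi_pmf (K - S) d p) \<psi> = measure_pmf.expectation (Pi_pmf K d p) \<psi>"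
    unfolding KS by (simp only: integral_map_pmf \<psi>M expectation_pair_pmf_snd)
  finally show ?thesis .
qed


lemma UNIV_mark: "(UNIV :: mark set) = {RR, CC, RC, CR}"
  using mark.exhaust by auto

lemma finite_mark[simp]: "finite (UNIV :: mark set)"
  by (simp add: UNIV_mark)

lemma sum_mark: "(\<Sum>s\<in>(UNIV::mark set). f s) = f RR + f CC + f RC + f CR"
  by (simp add: UNIV_mark add.assoc)

definition cnt :: "nat \<times> nat \<Rightarrow> nat \<times> nat \<Rightarrow> nat" where
  "cnt q v = of_bool (fst q = fst v) + of_bool (snd q = snd v) + of_bool (snd q = fst v) + of_bool (fst q = snd v)"

lemma cnt_sym: "cnt q v = cnt v q"
  unfolding cnt_def by auto

lemma coinc_sum: "(\<Sum>s\<in>UNIV. coinc w ((a, b), s)) = cnt (w a) (w b)"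
  unfolding sum_mark cnt_def by simp

lemma finite_board[simp]: "finite (board n)"
  by (rule finite_subset[of _ "{1..n} \<times> {1..n}"]) (auto simp: board_def)

lemma card_board: "2 * card (board n) = n * (n - 1)"
proof (induction n)
  case 0
  have "board 0 = {}" by (auto simp: board_def)
  thus ?case by simp
next
  case (Suc n)
  have "board (Suc n) = board n \<union> (\<lambda>i. (i, Suc n)) ` {1..n}"
    by (auto simp: board_def)
  moreover have "board n \<inter> (\<lambda>i. (i, Suc n)) ` {1..n} = {}" by (auto simp: board_def)
  ultimately have "card (board (Suc n)) = card (board n) + n"
    by (simp add: card_Un_disjoint card_image inj_on_def)
  thus ?case using Suc by (cases n) (auto simp: algebra_simps)
qed

lemma board_nonempty: "2 \<le> n \<Longrightarrow> board n \<noteq> {}"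
proof -
  assume "2 \<le> n"
  hence "(1, 2) \<in> board n" by (simp add: board_def)
  thus "board n \<noteq> {}" by blast
qed

lemma sum_cnt:
  assumes "q \<in> board n"
  shows "(\<Sum>v\<in>board n. cnt q v) = 2 * n - 2"
proof -
  obtain i j where q: "q = (i, j)" "1 \<le> i" "i < j" "j \<le> n" using assms by (auto simp: board_def)
  have c1: "card {v \<in> board n. i = fst v} = n - i"
  proof -
    have "{v \<in> board n. i = fst v} = Pair i ` {i<..n}" using q by (auto simp: board_def)
    thus ?thesis by (simp add: card_image inj_on_def)
  qed
  have c2: "card {v \<in> board n. j = snd v} = j - 1"
  proof -
    have "{v \<in> board n. j = snd v} = (\<lambda>x. (x, j)) ` {1..<j}" using q by (auto simp: board_def)
    thus ?thesis by (simp add: card_image inj_on_def)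
  qed
  have c3: "card {v \<in> board n. j = fst v} = n - j"
  proof -
    have "{v \<in> board n. j = fst v} = Pair j ` {j<..n}" using q by (auto simp: board_def)
    thus ?thesis by (simp add: card_image inj_on_def)
  qed
  have c4: "card {v \<in> board n. i = snd v} = i - 1"
  proof -
    have "{v \<in> board n. i = snd v} = (\<lambda>x. (x, i)) ` {1..<i}" using q by (auto simp: board_def)
    thus ?thesis by (simp add: card_image inj_on_def)
  qed
  have "(\<Sum>v\<in>board n. cnt q v) = card (board n \<inter> {v. i = fst v}) + card (board n \<inter> {v. j = snd v})
        + card (board n \<inter> {v. j = fst v}) + card (board n \<inter> {v. i = snd v})"
    unfolding cnt_def q sum.distrib by simp
  also have "\<dots> = (n - i) + (j - 1) + (n - j) + (i - 1)"
    using c1 c2 c3 c4 by (simp add: Int_def Collect_conj_eq[symmetric] conj_commute)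
  also have "\<dots> = 2 * n - 2" using q by simp
  finally show ?thesis .
qed

lemma E_cnt:
  assumes "q \<in> board n" "2 \<le> n"
  shows "measure_pmf.expectation (pmf_of_set (board n)) (\<lambda>v. real (cnt q v)) = 4 / real n"
proof -
  have ne: "board n \<noteq> {}" using board_nonempty assms by simp
  have "measure_pmf.expectation (pmf_of_set (board n)) (\<lambda>v. real (cnt q v)) = real (\<Sum>v\<in>board n. cnt q v) / real (card (board n))"
    using ne by (simp add: integral_pmf_of_set)
  also have "\<dots> = real (2 * n - 2) / real (card (board n))" using sum_cnt[OF assms(1)] by simp
  also have "real (card (board n)) = real n * (real n - 1) / 2"
    using arg_cong[OF card_board[of n], of real] assms by (simp add: of_nat_diff)
  also have "real (2 * n - 2) / (real n * (real n - 1) / 2) = 4 / real n"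
    using assms by (simp add: of_nat_diff field_simps)
  finally show ?thesis .
qed

lemma E_eq:
  assumes "q \<in> board n" "2 \<le> n"
  shows "measure_pmf.expectation (pmf_of_set (board n)) (\<lambda>v. if q = v then 1 else 0::real) = 2 / (real n * (real n - 1))"
proof -
  have ne: "board n \<noteq> {}" using board_nonempty assms by simp
  have "measure_pmf.expectation (pmf_of_set (board n)) (\<lambda>v. if q = v then 1 else 0::real) = (\<Sum>v\<in>board n. if q = v then 1 else 0::real) / real (card (board n))"
    using ne by (simp add: integral_pmf_of_set)
  also have "(\<Sum>v\<in>board n. if q = v then 1 else 0::real) = 1" using assms by simp
  also have "real (card (board n)) = real n * (real n - 1) / 2"
    using arg_cong[OF card_board[of n], of real] assms by (simp add: of_nat_diff)
  finally show ?thesis by simp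
qed


lemma E_cong_supp:
  fixes f g :: "'a \<Rightarrow> real"
  shows "(\<And>x. x \<in> set_pmf p \<Longrightarrow> f x = g x) \<Longrightarrow> measure_pmf.expectation p f = measure_pmf.expectation p g"
  by (rule integral_cong_AE) (auto simp: AE_measure_pmf_iff)

lemma coinc_le1: "coinc w ((a, b), s) \<le> 1"
  by (cases s) auto

lemma coinc_cong: "w a = w' a \<Longrightarrow> w b = w' b \<Longrightarrow> coinc w ((a, b), s) = coinc w' ((a, b), s)"
  by (cases s) auto

lemma coinc_le1': "coinc w j \<le> 1"
  by (metis coinc_le1 prod.exhaust)

lemma cnt_le4: "cnt q v \<le> 4" unfolding cnt_def by simp

locale rook_ctx =
  fixes n r :: nat
  assumes n2: "2 \<le> n" and rn: "r < n"
begin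

abbreviation "K \<equiv> {1..r}"
abbreviation "U \<equiv> pmf_of_set (board n)"
abbreviation "P \<equiv> Pi_pmf K undefined (\<lambda>_. U)"

lemma bd_ne: "board n \<noteq> {}" using board_nonempty n2 by simp

lemma setU: "set_pmf U = board n" using bd_ne by simp

lemma P_eq: "rook_config n r = P"
proof -
  have "PiE_dflt K undefined (\<lambda>_. board n) = PiE K (\<lambda>_. board n)"
    by (auto simp: PiE_dflt_def PiE_def extensional_def Pi_def)
  thus ?thesis unfolding rook_config_def
    by (subst Pi_pmf_of_set) (use bd_ne in auto)
qed

lemma supp: "f \<in> set_pmf (Pi_pmf L undefined (\<lambda>_. U)) \<Longrightarrow> finite L \<Longrightarrow> a \<in> L \<Longrightarrow> f a \<in> board n"
  by (auto simp: set_Pi_pmf setU PiE_dflt_def)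

lemma finP: "finite (set_pmf P)"
  by (simp add: set_Pi_pmf setU finite_PiE_dflt)

lemma R1:
  assumes "a \<in> K" "b \<in> K" "a \<noteq> b"
  shows "measure_pmf.expectation P (\<lambda>w. real (cnt (w a) (w b))) = 4 / real n"
proof -
  have "measure_pmf.expectation P (\<lambda>w. real (cnt (w a) (w b))) =
        measure_pmf.expectation (Pi_pmf (K - {b}) undefined (\<lambda>_. U))
          (\<lambda>f. measure_pmf.expectation U (\<lambda>v. real (cnt ((f(b:=v)) a) ((f(b:=v)) b))))"
    by (rule peel[where C=4]) (use assms cnt_le4 in auto)
  also have "\<dots> = measure_pmf.expectation (Pi_pmf (K - {b}) undefined (\<lambda>_. U)) (\<lambda>f. 4 / real n)"
  proof (rule E_cong_supp)
    fix f assume f: "f \<in> set_pmf (Pi_pmf (K - {b}) undefined (\<lambda>_. U))"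
    have "f a \<in> board n" by (rule supp[OF f]) (use assms in auto)
    thus "measure_pmf.expectation U (\<lambda>v. real (cnt ((f(b:=v)) a) ((f(b:=v)) b))) = 4 / real n"
      using assms E_cnt[of "f a" n] n2 by simp
  qed
  finally show ?thesis by simp
qed

lemma R2:
  assumes "a \<in> K" "b \<in> K" "a \<noteq> b"
  shows "measure_pmf.expectation P (\<lambda>w. if w a = w b then 1 else 0::real) = 2 / (real n * (real n - 1))"
proof -
  have "measure_pmf.expectation P (\<lambda>w. if w a = w b then 1 else 0::real) =
        measure_pmf.expectation (Pi_pmf (K - {b}) undefined (\<lambda>_. U))
          (\<lambda>f. measure_pmf.expectation U (\<lambda>v. if (f(b:=v)) a = (f(b:=v)) b then 1 else 0::real))"
    by (rule peel[where C=1]) (use assms in auto)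
  also have "\<dots> = measure_pmf.expectation (Pi_pmf (K - {b}) undefined (\<lambda>_. U)) (\<lambda>f. 2 / (real n * (real n - 1)))"
  proof (rule E_cong_supp)
    fix f assume f: "f \<in> set_pmf (Pi_pmf (K - {b}) undefined (\<lambda>_. U))"
    have "f a \<in> board n" by (rule supp[OF f]) (use assms in auto)
    thus "measure_pmf.expectation U (\<lambda>v. if (f(b:=v)) a = (f(b:=v)) b then 1 else 0::real) = 2 / (real n * (real n - 1))"
      using assms E_eq[of "f a" n] n2 by simp
  qed
  finally show ?thesis by simp
qed

lemma R3:
  assumes "x \<in> K" "y \<in> K" "z \<in> K" "x \<noteq> y" "x \<noteq> z" "y \<noteq> z"
  shows "measure_pmf.expectation P (\<lambda>w. real (cnt (w x) (w y)) * real (cnt (w x) (w z))) = 16 / (real n)^2"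
proof -
  have b16: "\<bar>real (cnt q v) * real (cnt q' v')\<bar> \<le> 16" for q v q' v'
    using mult_mono[OF cnt_le4[of q v] cnt_le4[of q' v']] by (simp flip: of_nat_mult)
  have "measure_pmf.expectation P (\<lambda>w. real (cnt (w x) (w y)) * real (cnt (w x) (w z))) =
        measure_pmf.expectation (Pi_pmf (K - {z}) undefined (\<lambda>_. U))
          (\<lambda>f. measure_pmf.expectation U (\<lambda>v. real (cnt ((f(z:=v)) x) ((f(z:=v)) y)) * real (cnt ((f(z:=v)) x) ((f(z:=v)) z))))"
    by (rule peel[where C=16]) (use assms b16 in auto)
  also have "\<dots> = measure_pmf.expectation (Pi_pmf (K - {z}) undefined (\<lambda>_. U)) (\<lambda>f. real (cnt (f x) (f y)) * (4 / real n))"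
  proof (rule E_cong_supp)
    fix f assume f: "f \<in> set_pmf (Pi_pmf (K - {z}) undefined (\<lambda>_. U))"
    have "f x \<in> board n" by (rule supp[OF f]) (use assms in auto)
    thus "measure_pmf.expectation U (\<lambda>v. real (cnt ((f(z:=v)) x) ((f(z:=v)) y)) * real (cnt ((f(z:=v)) x) ((f(z:=v)) z)))
          = real (cnt (f x) (f y)) * (4 / real n)"
      using assms E_cnt[of "f x" n] n2 by simp
  qed
  also have "\<dots> = measure_pmf.expectation (Pi_pmf (K - {z}) undefined (\<lambda>_. U)) (\<lambda>f. real (cnt (f x) (f y))) * (4 / real n)"
    by simp
  also have "measure_pmf.expectation (Pi_pmf (K - {z}) undefined (\<lambda>_. U)) (\<lambda>f. real (cnt (f x) (f y))) =
             measure_pmf.expectation P (\<lambda>w. real (cnt (w x) (w y)))"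
  proof -
    have "measure_pmf.expectation P (\<lambda>w. real (cnt (w x) (w y))) =
        measure_pmf.expectation (Pi_pmf (K - {z}) undefined (\<lambda>_. U))
          (\<lambda>f. measure_pmf.expectation U (\<lambda>v. real (cnt ((f(z:=v)) x) ((f(z:=v)) y))))"
      by (rule peel[where C=4]) (use assms cnt_le4 in auto)
    also have "\<dots> = measure_pmf.expectation (Pi_pmf (K - {z}) undefined (\<lambda>_. U)) (\<lambda>f. real (cnt (f x) (f y)))"
      using assms by simp
    finally show ?thesis by simp
  qed
  also have "\<dots> = 4 / real n" by (rule R1) (use assms in auto)
  finally show ?thesis by (simp add: power2_eq_square)
qed

definition "Ir = rook_index r"
definition "Xr w \<alpha> = (if \<alpha> \<in> Ir then coinc w \<alpha> else 0)"
definition "Br j = {\<beta>::(nat \<times> nat) \<times> mark. {fst (fst \<beta>), snd (fst \<beta>)} \<inter> {fst (fst j), snd (fst j)} \<noteq> {}}"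
definition "lamr j = measure_pmf.expectation P (\<lambda>w. real (Xr w j))"

lemma finIr: "finite Ir"
  unfolding Ir_def rook_index_def
  by (rule finite_subset[of _ "({1..r} \<times> {1..r}) \<times> UNIV"]) auto

lemma Xr01: "Xr w j \<le> 1"
  unfolding Xr_def using coinc_le1'[of w j] by simp

lemma indep_r:
  assumes j: "j \<in> Ir" and g: "\<And>z. \<bar>g z\<bar> \<le> C"
  shows "measure_pmf.expectation P (\<lambda>w. real (Xr w j) * g (\<lambda>\<beta>. if \<beta> \<in> Br j then 0 else Xr w \<beta>)) =
         lamr j * measure_pmf.expectation P (\<lambda>w. g (\<lambda>\<beta>. if \<beta> \<in> Br j then 0 else Xr w \<beta>))"
proof -
  obtain a b s where js: "j = ((a, b), s)" "1 \<le> a" "a < b" "b \<le> r"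
    using j unfolding Ir_def rook_index_def by auto
  show ?thesis unfolding lamr_def
  proof (rule Pi_indep[where S="{a, b}" and Ca=1 and Cb=C])
    show "finite K" by simp
    show "{a, b} \<subseteq> K" using js by auto
  next
    fix w w' :: "nat \<Rightarrow> nat \<times> nat" assume h: "\<And>x. x \<in> {a, b} \<Longrightarrow> w x = w' x"
    show "real (Xr w j) = real (Xr w' j)" unfolding Xr_def js
      using coinc_cong[of w a w' b s] h by simp
  next
    fix w w' :: "nat \<Rightarrow> nat \<times> nat" assume h: "\<And>x. x \<in> K - {a, b} \<Longrightarrow> w x = w' x"
    have "(\<lambda>\<beta>. if \<beta> \<in> Br j then 0 else Xr w \<beta>) = (\<lambda>\<beta>. if \<beta> \<in> Br j then 0 else Xr w' \<beta>)"
    proof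
      fix \<beta> :: "(nat \<times> nat) \<times> mark"
      obtain a' b' t where bt: "\<beta> = ((a', b'), t)" by (metis prod.exhaust)
      show "(if \<beta> \<in> Br j then 0 else Xr w \<beta>) = (if \<beta> \<in> Br j then 0 else Xr w' \<beta>)"
      proof (cases "\<beta> \<in> Br j \<or> \<beta> \<notin> Ir")
        case True thus ?thesis unfolding Xr_def by auto
      next
        case False
        hence "a' \<in> K - {a, b}" "b' \<in> K - {a, b}"
          unfolding bt Br_def js Ir_def rook_index_def by auto
        hence "coinc w \<beta> = coinc w' \<beta>" unfolding bt using h by (intro coinc_cong) auto
        thus ?thesis unfolding Xr_def by simp
      qed
    qed
    thus "g (\<lambda>\<beta>. if \<beta> \<in> Br j then 0 else Xr w \<beta>) = g (\<lambda>\<beta>. if \<beta> \<in> Br j then 0 else Xr w' \<beta>)" by simp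
  next
    show "\<bar>real (Xr w j)\<bar> \<le> 1" for w using Xr01[of w j] by simp
    show "\<bar>g (\<lambda>\<beta>. if \<beta> \<in> Br j then 0 else Xr w \<beta>)\<bar> \<le> C" for w by (rule g)
  qed
qed

lemma rook_setup: "stein_setup P Ir Xr Br lamr"
proof
  show "finite (set_pmf P)" by (rule finP)
  show "finite Ir" by (rule finIr)
  show "Xr w j \<le> 1" for w j by (rule Xr01)
  show "j \<notin> Ir \<Longrightarrow> Xr w j = 0" for w j by (simp add: Xr_def)
  show "lamr j = measure_pmf.expectation P (\<lambda>w. real (Xr w j))" for j by (simp add: lamr_def)
  show "\<beta> \<in> Br j \<longleftrightarrow> j \<in> Br \<beta>" for j \<beta> unfolding Br_def by blast
  show "measure_pmf.expectation P (\<lambda>w. real (Xr w j) * g (\<lambda>\<beta>. if \<beta> \<in> Br j then 0 else Xr w \<beta>)) =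
      lamr j * measure_pmf.expectation P (\<lambda>w. g (\<lambda>\<beta>. if \<beta> \<in> Br j then 0 else Xr w \<beta>))"
    if "j \<in> Ir" "\<And>z. \<bar>g z\<bar> \<le> C" for j g C by (rule indep_r) (use that in auto)
qed

end

lemma coinc_pair_bound:
  fixes q q' :: "nat \<times> nat"
  assumes "fst q < snd q" "fst q' < snd q'"
  defines "c1 \<equiv> (if fst q = fst q' then 1 else 0 :: real)"
      and "c2 \<equiv> (if snd q = snd q' then 1 else 0 :: real)"
      and "c3 \<equiv> (if snd q = fst q' then 1 else 0 :: real)"
      and "c4 \<equiv> (if fst q = snd q' then 1 else 0 :: real)"
  shows "(c1 + c2 + c3 + c4)^2 - (c1^2 + c2^2 + c3^2 + c4^2) \<le> 2 * (if q = q' then 1 else 0)"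
proof -
  obtain i j i' j' where q: "q = (i, j)" "q' = (i', j')" by (metis prod.exhaust)
  have e: "(c1 + c2 + c3 + c4)^2 - (c1^2 + c2^2 + c3^2 + c4^2) = 2 * (c1*c2 + c1*c3 + c1*c4 + c2*c3 + c2*c4 + c3*c4)"
    by (simp add: power2_eq_square algebra_simps)
  have z: "c1*c3 = 0" "c1*c4 = 0" "c2*c3 = 0" "c2*c4 = 0" "c3*c4 = 0"
    using assms(1,2) unfolding c1_def c2_def c3_def c4_def q by auto
  have "c1 * c2 \<le> (if q = q' then 1 else 0)"
    unfolding c1_def c2_def q by auto
  thus ?thesis unfolding e z by simp
qed

lemma sum_minus_mark: fixes g :: "mark \<Rightarrow> mark \<Rightarrow> real" shows "(\<Sum>s\<in>(UNIV::mark set). \<Sum>t\<in>UNIV - {s}. g s t) =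
     (\<Sum>s\<in>UNIV. \<Sum>t\<in>UNIV. g s t) - (\<Sum>s\<in>UNIV. g s s)"
proof -
  have "(\<Sum>t\<in>UNIV - {s}. g s t) = (\<Sum>t\<in>UNIV. g s t) - g s s" for s
    using sum.remove[of UNIV s "g s"] by simp
  thus ?thesis by (simp add: sum_subtractf)
qed

context rook_ctx
begin

interpretation S: stein_setup P Ir Xr Br lamr "{}" by (rule rook_setup)

lemma Ir_eq: "Ir = board r \<times> UNIV"
  unfolding Ir_def rook_index_def board_def by auto

lemma in_board_K: "(a, b) \<in> board r \<Longrightarrow> a \<in> K \<and> b \<in> K \<and> a < b"
  by (auto simp: board_def)

lemma suppP: "w \<in> set_pmf P \<Longrightarrow> a \<in> K \<Longrightarrow> w a \<in> board n"
  by (rule supp) auto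

lemma lamr_pair:
  assumes "p \<in> board r"
  shows "lamr (p, s) = S.Es (\<lambda>w. real (coinc w (p, s)))"
  unfolding lamr_def S.E_Es Xr_def Ir_eq using assms by simp

lemma lam_sum:
  assumes "p \<in> board r"
  shows "(\<Sum>s\<in>UNIV. lamr (p, s)) = 4 / real n"
proof -
  obtain a b where p: "p = (a, b)" by (metis prod.exhaust)
  have ab: "a \<in> K" "b \<in> K" "a \<noteq> b" using in_board_K assms p by auto
  have "(\<Sum>s\<in>UNIV. lamr (p, s)) = S.Es (\<lambda>w. \<Sum>s\<in>UNIV. real (coinc w (p, s)))"
    using assms by (subst S.Es_sum) (simp_all add: lamr_pair)
  also have "\<dots> = S.Es (\<lambda>w. real (cnt (w a) (w b)))"
    unfolding p by (simp flip: of_nat_sum add: coinc_sum)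
  also have "\<dots> = 4 / real n" using R1[OF ab] unfolding S.E_Es .
  finally show ?thesis .
qed

definition "Qp p = {q \<in> board r. q \<noteq> p \<and> {fst q, snd q} \<inter> {fst p, snd p} \<noteq> {}}"

lemma nbhd:
  assumes "p \<in> board r"
  shows "Ir \<inter> Br (p, s) - {(p, s)} = ({p} \<times> (UNIV - {s})) \<union> (Qp p \<times> UNIV)"
  using assms unfolding Ir_eq Br_def Qp_def by auto

lemma card_Qp:
  assumes "p \<in> board r"
  shows "card (Qp p) \<le> 2 * (r - 2)"
proof -
  obtain a b where p: "p = (a, b)" by (metis prod.exhaust)
  have ab: "a \<in> K" "b \<in> K" "a < b" using in_board_K assms p by auto
  have "Qp p \<subseteq> (\<lambda>(x, c). (min x c, max x c)) ` ({a, b} \<times> (K - {a, b}))"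
  proof
    fix q assume q: "q \<in> Qp p"
    obtain a' b' where q': "q = (a', b')" by (metis prod.exhaust)
    have h: "a' \<in> K" "b' \<in> K" "a' < b'" "(a', b') \<noteq> (a, b)" "{a', b'} \<inter> {a, b} \<noteq> {}"
      using q in_board_K[of a' b'] unfolding Qp_def q' p by auto
    show "q \<in> (\<lambda>(x, c). (min x c, max x c)) ` ({a, b} \<times> (K - {a, b}))"
    proof (cases "a' \<in> {a, b}")
      case True
      hence "b' \<notin> {a, b}" using h ab by auto
      thus ?thesis unfolding q' using True h
        by (intro image_eqI[where x="(a', b')"]) auto
    next
      case False
      hence "b' \<in> {a, b}" using h by auto
      thus ?thesis unfolding q' using False h
        by (intro image_eqI[where x="(b', a')"]) auto
    qed
  qed
  hence "card (Qp p) \<le> card ((\<lambda>(x, c). (min x c, max x c)) ` ({a, b} \<times> (K - {a, b})))"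
    by (intro card_mono) auto
  also have "\<dots> \<le> card ({a, b} \<times> (K - {a, b}))" by (rule card_image_le) auto
  also have "\<dots> = 2 * (r - 2)" using ab by (simp add: card_cartesian_product card_Diff_subset)
  finally show ?thesis .
qed

lemma E_cross:
  assumes "p \<in> board r" "q \<in> Qp p"
  shows "S.Es (\<lambda>w. real (cnt (w (fst p)) (w (snd p))) * real (cnt (w (fst q)) (w (snd q)))) = 16 / (real n)^2"
proof -
  obtain a b where p: "p = (a, b)" by (metis prod.exhaust)
  obtain a' b' where q': "q = (a', b')" by (metis prod.exhaust)
  have ab: "a \<in> K" "b \<in> K" "a < b" using in_board_K assms p by auto
  have h: "a' \<in> K" "b' \<in> K" "a' < b'" "(a', b') \<noteq> (a, b)" "{a', b'} \<inter> {a, b} \<noteq> {}"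
    using assms in_board_K[of a' b'] unfolding Qp_def q' p by auto
  have "\<exists>x y z. x \<in> K \<and> y \<in> K \<and> z \<in> K \<and> x \<noteq> y \<and> x \<noteq> z \<and> y \<noteq> z \<and>
        (\<forall>w. cnt (w a) (w b) = cnt (w x) (w y) \<and> cnt (w a') (w b') = cnt (w x) (w z))"
  proof -
    consider "a' = a" | "a' = b" | "b' = a" | "b' = b" using h by auto
    thus ?thesis
    proof cases
      case 1 thus ?thesis using h ab by (intro exI[of _ a] exI[of _ b] exI[of _ b']) auto
    next
      case 2 thus ?thesis using h ab by (intro exI[of _ b] exI[of _ a] exI[of _ b']) (auto simp: cnt_sym)
    next
      case 3 thus ?thesis using h ab by (intro exI[of _ a] exI[of _ b] exI[of _ a']) (auto simp: cnt_sym)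
    next
      case 4 thus ?thesis using h ab by (intro exI[of _ b] exI[of _ a] exI[of _ a']) (auto simp: cnt_sym)
    qed
  qed
  then obtain x y z where xyz: "x \<in> K" "y \<in> K" "z \<in> K" "x \<noteq> y" "x \<noteq> z" "y \<noteq> z"
    and e: "\<And>w. cnt (w a) (w b) = cnt (w x) (w y)" "\<And>w. cnt (w a') (w b') = cnt (w x) (w z)" by blast
  show ?thesis unfolding p q' fst_conv snd_conv e S.E_Es[symmetric] by (rule R3[OF xyz])
qed

lemma E_same:
  assumes "p \<in> board r"
  shows "(\<Sum>s\<in>UNIV. \<Sum>t\<in>UNIV - {s}. S.Es (\<lambda>w. real (Xr w (p, s)) * real (Xr w (p, t))))
           \<le> 4 / (real n * (real n - 1))"
proof -
  obtain a b where p: "p = (a, b)" by (metis prod.exhaust)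
  have ab: "a \<in> K" "b \<in> K" "a \<noteq> b" using in_board_K assms p by auto
  define c where "c w s = real (coinc w (p, s))" for w s
  have X: "real (Xr w (p, s)) = c w s" for w s unfolding Xr_def c_def Ir_eq using assms by simp
  have "(\<Sum>s\<in>UNIV. \<Sum>t\<in>UNIV - {s}. S.Es (\<lambda>w. real (Xr w (p, s)) * real (Xr w (p, t))))
        = S.Es (\<lambda>w. (\<Sum>s\<in>UNIV. \<Sum>t\<in>UNIV - {s}. c w s * c w t))"
    unfolding X by (subst S.Es_sum, simp, subst S.Es_sum, simp_all)
  also have "\<dots> \<le> S.Es (\<lambda>w. 2 * (if w a = w b then 1 else 0))"
  proof (rule S.Es_mono)
    fix w assume w: "w \<in> set_pmf P"
    have wa: "fst (w a) < snd (w a)" "fst (w b) < snd (w b)"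
      using suppP[OF w ab(1)] suppP[OF w ab(2)] by (auto simp: board_def)
    have "(\<Sum>s\<in>UNIV. \<Sum>t\<in>UNIV - {s}. c w s * c w t) = (\<Sum>s\<in>UNIV. c w s)^2 - (\<Sum>s\<in>UNIV. (c w s)^2)"
      unfolding sum_minus_mark power2_eq_square sum_product by simp
    also have "\<dots> \<le> 2 * (if w a = w b then 1 else 0)"
      using coinc_pair_bound[OF wa] unfolding c_def p sum_mark coinc.simps if_distrib[of real] of_nat_1 of_nat_0 .
    finally show "(\<Sum>s\<in>UNIV. \<Sum>t\<in>UNIV - {s}. c w s * c w t) \<le> 2 * (if w a = w b then 1 else 0)" .
  qed
  also have "\<dots> = 4 / (real n * (real n - 1))"
    using R2[OF ab] unfolding S.E_Es S.Es_cmult by simp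
  finally show ?thesis .
qed


lemma lamr_nonneg: "0 \<le> lamr k" using S.lam_nonneg .

lemma per_pair:
  assumes p: "p \<in> board r"
  shows "(\<Sum>s\<in>UNIV. 2 * lamr (p, s) ^ 2 + (\<Sum>\<beta>\<in>Ir \<inter> Br (p, s) - {(p, s)}.
            lamr (p, s) * lamr \<beta> + S.Es (\<lambda>w. real (Xr w (p, s)) * real (Xr w \<beta>))))
         \<le> 32 / (real n)^2 + 32 * real (card (Qp p)) / (real n)^2 + 4 / (real n * (real n - 1))"
proof -
  define F where "F s \<beta> = lamr (p, s) * lamr \<beta> + S.Es (\<lambda>w. real (Xr w (p, s)) * real (Xr w \<beta>))" for s \<beta>
  have finQ: "finite (Qp p)" unfolding Qp_def by simp
  have pQ: "p \<notin> Qp p" unfolding Qp_def by simp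
  have nsplit: "(\<Sum>\<beta>\<in>Ir \<inter> Br (p, s) - {(p, s)}. F s \<beta>) =
               (\<Sum>t\<in>UNIV - {s}. F s (p, t)) + (\<Sum>q\<in>Qp p. \<Sum>t\<in>UNIV. F s (q, t))" for s
  proof -
    have "(\<Sum>\<beta>\<in>Ir \<inter> Br (p, s) - {(p, s)}. F s \<beta>) = (\<Sum>\<beta>\<in>({p} \<times> (UNIV - {s})) \<union> (Qp p \<times> UNIV). F s \<beta>)"
      unfolding nbhd[OF p] ..
    also have "\<dots> = (\<Sum>\<beta>\<in>{p} \<times> (UNIV - {s}). F s \<beta>) + (\<Sum>\<beta>\<in>Qp p \<times> UNIV. F s \<beta>)"
      by (rule sum.union_disjoint) (use finQ pQ in auto)
    also have "(\<Sum>\<beta>\<in>{p} \<times> (UNIV - {s}). F s \<beta>) = (\<Sum>t\<in>UNIV - {s}. F s (p, t))"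
      using sum.cartesian_product[where g="\<lambda>q t. F s (q, t)" and A="{p}" and B="UNIV - {s}"] by (simp add: prod.case_eq_if)
    also have "(\<Sum>\<beta>\<in>Qp p \<times> UNIV. F s \<beta>) = (\<Sum>q\<in>Qp p. \<Sum>t\<in>UNIV. F s (q, t))"
      using sum.cartesian_product[where g="\<lambda>q t. F s (q, t)" and A="Qp p" and B=UNIV] by (simp add: prod.case_eq_if)
    finally show ?thesis .
  qed
  define L where "L = (\<Sum>s\<in>UNIV. lamr (p, s))"
  have L: "L = 4 / real n" unfolding L_def by (rule lam_sum[OF p])
  have Lq: "(\<Sum>t\<in>UNIV. lamr (q, t)) = 4 / real n" if "q \<in> Qp p" for q
    using that unfolding Qp_def by (intro lam_sum) auto
  have A: "(\<Sum>s\<in>UNIV. 2 * lamr (p, s) ^ 2) + (\<Sum>s\<in>UNIV. \<Sum>t\<in>UNIV - {s}. lamr (p, s) * lamr (p, t)) \<le> 2 * L^2"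
  proof -
    have e: "(\<Sum>s\<in>UNIV. \<Sum>t\<in>UNIV - {s}. lamr (p, s) * lamr (p, t)) = L^2 - (\<Sum>s\<in>UNIV. lamr (p, s) ^ 2)"
      unfolding sum_minus_mark L_def power2_eq_square sum_product by simp
    have "0 \<le> (\<Sum>s\<in>UNIV. \<Sum>t\<in>UNIV - {s}. lamr (p, s) * lamr (p, t))"
      by (intro sum_nonneg mult_nonneg_nonneg lamr_nonneg)
    thus ?thesis using e by (simp add: sum_distrib_left[symmetric])
  qed
  have C: "(\<Sum>s\<in>UNIV. \<Sum>q\<in>Qp p. \<Sum>t\<in>UNIV. lamr (p, s) * lamr (q, t)) = real (card (Qp p)) * (4 / real n) * L"
  proof -
    have "(\<Sum>s\<in>UNIV. \<Sum>q\<in>Qp p. \<Sum>t\<in>UNIV. lamr (p, s) * lamr (q, t)) =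
          (\<Sum>s\<in>UNIV. lamr (p, s) * (\<Sum>q\<in>Qp p. \<Sum>t\<in>UNIV. lamr (q, t)))"
      by (simp add: sum_distrib_left)
    also have "(\<Sum>q\<in>Qp p. \<Sum>t\<in>UNIV. lamr (q, t)) = real (card (Qp p)) * (4 / real n)"
      using Lq by simp
    finally have "(\<Sum>s\<in>UNIV. \<Sum>q\<in>Qp p. \<Sum>t\<in>UNIV. lamr (p, s) * lamr (q, t)) =
       (\<Sum>s\<in>UNIV. lamr (p, s) * (real (card (Qp p)) * (4 / real n)))" .
    also have "\<dots> = (\<Sum>s\<in>UNIV. lamr (p, s)) * (real (card (Qp p)) * (4 / real n))"
      by (rule sum_distrib_right[symmetric])
    finally show ?thesis unfolding L_def by (simp only: ac_simps)
  qed
  have D: "(\<Sum>s\<in>UNIV. \<Sum>q\<in>Qp p. \<Sum>t\<in>UNIV. S.Es (\<lambda>w. real (Xr w (p, s)) * real (Xr w (q, t))))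
           = real (card (Qp p)) * (16 / (real n)^2)"
  proof -
    obtain a b where pab: "p = (a, b)" by (metis prod.exhaust)
    have XI: "Xr w (x, t) = coinc w (x, t)" if "x \<in> board r" for w x t
      unfolding Xr_def Ir_eq using that by simp
    have "(\<Sum>s\<in>UNIV. \<Sum>q\<in>Qp p. \<Sum>t\<in>UNIV. S.Es (\<lambda>w. real (Xr w (p, s)) * real (Xr w (q, t))))
        = (\<Sum>q\<in>Qp p. \<Sum>s\<in>UNIV. \<Sum>t\<in>UNIV. S.Es (\<lambda>w. real (Xr w (p, s)) * real (Xr w (q, t))))"
      by (rule sum.swap)
    also have "\<dots> = (\<Sum>q\<in>Qp p. S.Es (\<lambda>w. real (cnt (w (fst p)) (w (snd p))) * real (cnt (w (fst q)) (w (snd q)))))"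
    proof (rule sum.cong[OF refl])
      fix q assume q: "q \<in> Qp p"
      obtain a' b' where qab: "q = (a', b')" by (metis prod.exhaust)
      have qb: "q \<in> board r" using q unfolding Qp_def by auto
      have "(\<Sum>s\<in>UNIV. \<Sum>t\<in>UNIV. S.Es (\<lambda>w. real (Xr w (p, s)) * real (Xr w (q, t))))
            = S.Es (\<lambda>w. \<Sum>s\<in>UNIV. \<Sum>t\<in>UNIV. real (coinc w (p, s)) * real (coinc w (q, t)))"
        using p qb by (simp only: XI) (subst S.Es_sum, simp, subst S.Es_sum, simp_all)
      also have "\<dots> = S.Es (\<lambda>w. real (cnt (w (fst p)) (w (snd p))) * real (cnt (w (fst q)) (w (snd q))))"
        unfolding sum_product[symmetric] pab qab fst_conv snd_conv
        by (simp flip: of_nat_sum add: coinc_sum)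
      finally show "(\<Sum>s\<in>UNIV. \<Sum>t\<in>UNIV. S.Es (\<lambda>w. real (Xr w (p, s)) * real (Xr w (q, t))))
            = S.Es (\<lambda>w. real (cnt (w (fst p)) (w (snd p))) * real (cnt (w (fst q)) (w (snd q))))" .
    qed
    also have "\<dots> = (\<Sum>q\<in>Qp p. 16 / (real n)^2)" by (intro sum.cong refl E_cross[OF p])
    finally show ?thesis by simp
  qed
  have B: "(\<Sum>s\<in>UNIV. \<Sum>t\<in>UNIV - {s}. S.Es (\<lambda>w. real (Xr w (p, s)) * real (Xr w (p, t)))) \<le> 4 / (real n * (real n - 1))"
    by (rule E_same[OF p])
  have "(\<Sum>s\<in>UNIV. 2 * lamr (p, s) ^ 2 + (\<Sum>\<beta>\<in>Ir \<inter> Br (p, s) - {(p, s)}. F s \<beta>))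
      = (\<Sum>s\<in>UNIV. 2 * lamr (p, s) ^ 2) + (\<Sum>s\<in>UNIV. \<Sum>t\<in>UNIV - {s}. lamr (p, s) * lamr (p, t))
        + (\<Sum>s\<in>UNIV. \<Sum>t\<in>UNIV - {s}. S.Es (\<lambda>w. real (Xr w (p, s)) * real (Xr w (p, t))))
        + (\<Sum>s\<in>UNIV. \<Sum>q\<in>Qp p. \<Sum>t\<in>UNIV. lamr (p, s) * lamr (q, t))
        + (\<Sum>s\<in>UNIV. \<Sum>q\<in>Qp p. \<Sum>t\<in>UNIV. S.Es (\<lambda>w. real (Xr w (p, s)) * real (Xr w (q, t))))"
    by (simp only: nsplit sum.distrib) (simp add: F_def sum.distrib)
  also have "\<dots> \<le> 2 * L^2 + 4 / (real n * (real n - 1)) + real (card (Qp p)) * (4 / real n) * L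
                 + real (card (Qp p)) * (16 / (real n)^2)"
    using A B C D by linarith
  also have "\<dots> = 32 / (real n)^2 + 32 * real (card (Qp p)) / (real n)^2 + 4 / (real n * (real n - 1))"
    unfolding L by (simp add: power2_eq_square field_simps)
  finally show ?thesis unfolding F_def .
qed


lemma RB_total:
  "(\<Sum>k\<in>Ir. 2 * lamr k ^ 2 + (\<Sum>\<beta>\<in>Ir \<inter> Br k - {k}. lamr k * lamr \<beta> +
     measure_pmf.expectation P (\<lambda>w. real (Xr w k) * real (Xr w \<beta>)))) \<le> rook_bound n r"
proof -
  define c where "c = 32 / (real n)^2 + 64 * (real r - 2) / (real n)^2 + 4 / (real n * (real n - 1))"
  define T where "T k = 2 * lamr k ^ 2 + (\<Sum>\<beta>\<in>Ir \<inter> Br k - {k}. lamr k * lamr \<beta> +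
     S.Es (\<lambda>w. real (Xr w k) * real (Xr w \<beta>)))" for k
  have "(\<Sum>k\<in>Ir. 2 * lamr k ^ 2 + (\<Sum>\<beta>\<in>Ir \<inter> Br k - {k}. lamr k * lamr \<beta> +
     measure_pmf.expectation P (\<lambda>w. real (Xr w k) * real (Xr w \<beta>)))) = (\<Sum>k\<in>board r \<times> UNIV. T k)"
    unfolding T_def S.E_Es Ir_eq ..
  also have "\<dots> = (\<Sum>p\<in>board r. \<Sum>s\<in>UNIV. T (p, s))"
    using sum.cartesian_product[where g="\<lambda>p s. T (p, s)" and A="board r" and B=UNIV]
    by (simp add: prod.case_eq_if)
  also have "\<dots> \<le> (\<Sum>p\<in>board r. c)"
  proof (rule sum_mono)
    fix p assume p: "p \<in> board r"
    hence r2: "2 \<le> r" by (auto simp: board_def)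
    have "(\<Sum>s\<in>UNIV. T (p, s)) \<le> 32 / (real n)^2 + 32 * real (card (Qp p)) / (real n)^2 + 4 / (real n * (real n - 1))"
      unfolding T_def by (rule per_pair[OF p])
    also have "\<dots> \<le> c"
    proof -
      have "real (card (Qp p)) \<le> 2 * (real r - 2)"
        using card_Qp[OF p] r2 by (simp add: of_nat_diff)
      hence "32 * real (card (Qp p)) / (real n)^2 \<le> 64 * (real r - 2) / (real n)^2"
        by (simp add: divide_right_mono)
      thus ?thesis unfolding c_def by simp
    qed
    finally show "(\<Sum>s\<in>UNIV. T (p, s)) \<le> c" .
  qed
  also have "\<dots> = real (card (board r)) * c" by simp
  also have "\<dots> \<le> rook_bound n r"
  proof (cases "r \<le> 1")
    case True
    hence "board r = {}" by (auto simp: board_def)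
    moreover have "rook_bound n r = 0" using True unfolding rook_bound_def by (cases r) auto
    ultimately show ?thesis by simp
  next
    case False
    hence r2: "2 \<le> r" by simp
    have n3: "3 \<le> real n" using r2 rn by simp
    define R where "R = real r"
    define N where "N = real n"
    have R2: "2 \<le> R" using r2 unfolding R_def by simp
    have N3: "3 \<le> N" using n3 unfolding N_def by simp
    have cb: "real (card (board r)) = R * (R - 1) / 2"
      using arg_cong[OF card_board[of r], of real] r2 unfolding R_def by (simp add: of_nat_diff)
    define d where "d = R - 3/2"
    define Q where "Q = (N * (N - 301/181) + 166) / (N - 1)^2"
    have Q1: "1 \<le> Q"
    proof -
      have "(N - 1)^2 \<le> N * (N - 301/181) + 166" using N3 by (simp add: power2_eq_square algebra_simps)
      moreover have "0 < (N - 1)^2" using N3 by simp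
      ultimately show ?thesis unfolding Q_def by simp
    qed
    have d: "1/2 \<le> d" unfolding d_def using R2 by simp
    have Npos: "0 < N" using N3 by simp
    have e1: "2 / (N * (N - 1)) \<le> 3 / N^2"
    proof -
      have "2 * N^2 \<le> 3 * (N * (N - 1))" using N3 by (simp add: power2_eq_square algebra_simps)
      thus ?thesis using N3 by (simp add: field_simps power2_eq_square)
    qed
    have e2: "3 / N^2 \<le> (74/9) * d / N^2"
    proof -
      have "3 \<le> (74/9) * d" using d by simp
      from divide_right_mono[OF this, of "N^2"] show ?thesis by simp
    qed
    have "real (card (board r)) * c = R * (R - 1) * (32 * d / N^2 + 2 / (N * (N - 1)))"
      unfolding cb c_def d_def R_def[symmetric] N_def[symmetric] using N3 by (simp add: field_simps power2_eq_square)
    also have "\<dots> \<le> R * (R - 1) * ((362/9) * d / N^2)"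
    proof (rule mult_left_mono)
      show "0 \<le> R * (R - 1)" using R2 by simp
      have "32 * d / N^2 + 2 / (N * (N - 1)) \<le> 32 * d / N^2 + (74/9) * d / N^2" using e1 e2 by simp
      also have "\<dots> = (362/9) * d / N^2" by (simp add: field_simps)
      finally show "32 * d / N^2 + 2 / (N * (N - 1)) \<le> (362/9) * d / N^2" .
    qed
    also have "\<dots> \<le> R * (R - 1) * ((362/9) * d / N^2) * Q"
    proof -
      have "0 \<le> R * (R - 1) * ((362/9) * d / N^2)" using R2 d by simp
      from mult_left_mono[OF Q1 this] show ?thesis by simp
    qed
    also have "\<dots> = rook_bound n r"
      unfolding rook_bound_def Q_def d_def R_def N_def by (simp add: field_simps)
    finally show ?thesis .
  qed
  finally show ?thesis .
qed

end

lemma pois_conv_pos: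
  assumes a: "0 < a" and b: "0 < b"
  shows "map_pmf (\<lambda>(x, y). x + y) (pair_pmf (poisson_pmf a) (poisson_pmf b)) = poisson_pmf (a + b)"
proof (rule pmf_eqI)
  fix k :: nat
  have pre: "(\<lambda>(x, y). x + y) -` {k} = (\<lambda>i. (i, k - i)) ` {..k}"
    by (auto simp: image_iff) 
  have "pmf (map_pmf (\<lambda>(x, y). x + y) (pair_pmf (poisson_pmf a) (poisson_pmf b))) k
        = (\<Sum>q\<in>(\<lambda>i. (i, k - i)) ` {..k}. pmf (pair_pmf (poisson_pmf a) (poisson_pmf b)) q)"
    unfolding pmf_map pre by (rule measure_measure_pmf_finite) simp
  also have "\<dots> = (\<Sum>i\<le>k. pmf (poisson_pmf a) i * pmf (poisson_pmf b) (k - i))"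
    by (subst sum.reindex) (auto simp: inj_on_def pmf_pair)
  also have "\<dots> = (\<Sum>i\<le>k. (a ^ i / fact i * exp (-a)) * (b ^ (k - i) / fact (k - i) * exp (-b)))"
    using a b by simp
  also have "\<dots> = (\<Sum>i\<le>k. real (k choose i) * a ^ i * b ^ (k - i)) / fact k * exp (-(a + b))"
  proof -
    have "(a ^ i / fact i * exp (-a)) * (b ^ (k - i) / fact (k - i) * exp (-b)) =
          real (k choose i) * a ^ i * b ^ (k - i) / fact k * exp (-(a + b))" if "i \<le> k" for i
      using that by (simp add: binomial_fact exp_add[symmetric] field_simps)
    thus ?thesis by (simp add: sum_divide_distrib sum_distrib_right)
  qed
  also have "\<dots> = (a + b) ^ k / fact k * exp (-(a + b))"
    by (simp add: binomial_ring)
  also have "\<dots> = pmf (poisson_pmf (a + b)) k" using a b by simp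
  finally show "pmf (map_pmf (\<lambda>(x, y). x + y) (pair_pmf (poisson_pmf a) (poisson_pmf b))) k = pmf (poisson_pmf (a + b)) k" .
qed

lemma pois_conv:
  assumes a: "0 \<le> a" and b: "0 \<le> b"
  shows "map_pmf (\<lambda>(x, y). x + y) (pair_pmf (pois a) (pois b)) = pois (a + b)"
proof (cases "a = 0")
  case True
  thus ?thesis using b by (simp add: pois_def[of 0] pair_return_pmf1 map_pmf_comp)
next
  case False
  hence a': "0 < a" using a by simp
  show ?thesis
  proof (cases "b = 0")
    case True
    thus ?thesis using a by (simp add: pois_def[of 0] pair_return_pmf2 map_pmf_comp)
  next
    case False
    hence b': "0 < b" using b by simp
    show ?thesis using pois_conv_pos[OF a' b'] a' b' by (simp add: pois_def)
  qed
qed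

lemma pois_sum:
  assumes "finite J" "\<And>\<alpha>. 0 \<le> m \<alpha>"
  shows "map_pmf (\<lambda>y. \<Sum>\<alpha>\<in>J. y \<alpha>) (Pi_pmf J 0 (\<lambda>\<alpha>. pois (m \<alpha>))) = pois (\<Sum>\<alpha>\<in>J. m \<alpha>)"
  using assms(1)
proof (induction J rule: finite_induct)
  case empty
  thus ?case by (simp add: pois_def)
next
  case (insert j J)
  have "map_pmf (\<lambda>y. \<Sum>\<alpha>\<in>insert j J. y \<alpha>) (Pi_pmf (insert j J) 0 (\<lambda>\<alpha>. pois (m \<alpha>)))
      = map_pmf (\<lambda>(v, f). v + (\<Sum>\<alpha>\<in>J. f \<alpha>)) (pair_pmf (pois (m j)) (Pi_pmf J 0 (\<lambda>\<alpha>. pois (m \<alpha>))))"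
  proof -
    have e: "(\<Sum>\<alpha>\<in>insert j J. if \<alpha> = j then v else f \<alpha>) = v + sum f J" for f :: "'a \<Rightarrow> nat" and v
    proof -
      have "(\<Sum>\<alpha>\<in>J. if \<alpha> = j then v else f \<alpha>) = sum f J"
        by (rule sum.cong) (use insert.hyps in auto)
      thus ?thesis using insert.hyps by simp
    qed
    show ?thesis
      by (subst Pi_pmf_insert[OF insert.hyps]) (simp add: map_pmf_comp case_prod_unfold e)
  qed
  also have "\<dots> = map_pmf (\<lambda>(x, y). x + y) (pair_pmf (pois (m j)) (map_pmf (\<lambda>y. \<Sum>\<alpha>\<in>J. y \<alpha>) (Pi_pmf J 0 (\<lambda>\<alpha>. pois (m \<alpha>)))))"
    by (simp add: pair_map_pmf2 map_pmf_comp case_prod_unfold)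
  also have "\<dots> = pois (m j + (\<Sum>\<alpha>\<in>J. m \<alpha>))"
    unfolding insert.IH by (rule pois_conv) (use assms(2) in \<open>auto intro: sum_nonneg\<close>)
  also have "m j + (\<Sum>\<alpha>\<in>J. m \<alpha>) = (\<Sum>\<alpha>\<in>insert j J. m \<alpha>)" using insert.hyps by simp
  finally show ?case .
qed

lemma prob_diff_le1: "\<bar>measure_pmf.prob p A - measure_pmf.prob q B\<bar> \<le> 1"
  using measure_pmf.prob_le_1[of p A] measure_pmf.prob_le_1[of q B]
        measure_nonneg[of p A] measure_nonneg[of q B] by linarith

lemma dTV_map: "dTV (map_pmf f p) (map_pmf f q) \<le> dTV p q"
  unfolding dTV_def
proof (rule cSUP_least)
  show "UNIV \<noteq> {}" by simp
  fix A
  have "\<bar>measure_pmf.prob (map_pmf f p) A - measure_pmf.prob (map_pmf f q) A\<bar> =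
        \<bar>measure_pmf.prob p (f -` A) - measure_pmf.prob q (f -` A)\<bar>" by simp
  also have "\<dots> \<le> (SUP B. \<bar>measure_pmf.prob p B - measure_pmf.prob q B\<bar>)"
    by (rule cSUP_upper) (auto intro!: bdd_aboveI[where M=1] simp: prob_diff_le1)
  finally show "\<bar>measure_pmf.prob (map_pmf f p) A - measure_pmf.prob (map_pmf f q) A\<bar> \<le> (SUP B. \<bar>measure_pmf.prob p B - measure_pmf.prob q B\<bar>)" .
qed


lemma Pi_split_map:
  assumes "finite A" "finite B" "A \<inter> B = {}"
    and \<Psi>: "\<And>y y'. (\<And>x. x \<in> B \<Longrightarrow> y x = y' x) \<Longrightarrow> \<Psi> y = \<Psi> y'"
  shows "map_pmf (\<lambda>y. ((\<Sum>\<alpha>\<in>A. y \<alpha>) :: nat, \<Psi> y)) (Pi_pmf (A \<union> B) d p) =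
         pair_pmf (map_pmf (\<lambda>y. \<Sum>\<alpha>\<in>A. y \<alpha>) (Pi_pmf A d p)) (map_pmf \<Psi> (Pi_pmf B d p))"
proof -
  have e: "(\<lambda>y. ((\<Sum>\<alpha>\<in>A. y \<alpha>), \<Psi> y)) \<circ> (\<lambda>(f, g) x. if x \<in> A then f x else g x) =
           (\<lambda>(f, g). ((\<Sum>\<alpha>\<in>A. f \<alpha>), \<Psi> g))"
  proof (rule ext)
    fix q :: "('a \<Rightarrow> nat) \<times> ('a \<Rightarrow> nat)"
    have 1: "(\<Sum>\<alpha>\<in>A. if \<alpha> \<in> A then fst q \<alpha> else snd q \<alpha>) = (\<Sum>\<alpha>\<in>A. fst q \<alpha>)"
      by (rule sum.cong) auto
    have 2: "\<Psi> (\<lambda>x. if x \<in> A then fst q x else snd q x) = \<Psi> (snd q)"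
      by (rule \<Psi>) (use assms(3) in auto)
    show "((\<lambda>y. ((\<Sum>\<alpha>\<in>A. y \<alpha>), \<Psi> y)) \<circ> (\<lambda>(f, g) x. if x \<in> A then f x else g x)) q =
          (\<lambda>(f, g). ((\<Sum>\<alpha>\<in>A. f \<alpha>), \<Psi> g)) q"
      using 1 2 by (simp add: case_prod_unfold)
  qed
  have "map_pmf (\<lambda>y. ((\<Sum>\<alpha>\<in>A. y \<alpha>) :: nat, \<Psi> y)) (Pi_pmf (A \<union> B) d p) =
        map_pmf (\<lambda>y. ((\<Sum>\<alpha>\<in>A. y \<alpha>) :: nat, \<Psi> y)) (map_pmf (\<lambda>(f, g) x. if x \<in> A then f x else g x)
           (pair_pmf (Pi_pmf A d p) (Pi_pmf B d p)))"
    by (subst Pi_pmf_union[OF assms(1-3)]) (rule refl)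
  also have "\<dots> = map_pmf (\<lambda>(f, g). ((\<Sum>\<alpha>\<in>A. f \<alpha>), \<Psi> g)) (pair_pmf (Pi_pmf A d p) (Pi_pmf B d p))"
    unfolding pmf.map_comp e ..
  also have "\<dots> = pair_pmf (map_pmf (\<lambda>y. \<Sum>\<alpha>\<in>A. y \<alpha>) (Pi_pmf A d p)) (map_pmf \<Psi> (Pi_pmf B d p))"
    by (rule map_pair)
  finally show ?thesis .
qed

theorem lemma3p2:
  fixes n k r :: nat
  assumes "2 \<le> n" and "1 \<le> k" and "k \<le> n" and "r = n - k"
  defines "P \<equiv> rook_config n r"
  defines "I \<equiv> rook_index r"
  defines "EXa \<equiv> (\<lambda>\<alpha>. measure_pmf.expectation P (\<lambda>w. real (coinc w \<alpha>)))"
  defines "LX \<equiv> map_pmf (\<lambda>w. \<lambda>\<alpha>. if \<alpha> \<in> I then coinc w \<alpha> else 0) P"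
  defines "LY \<equiv> Pi_pmf I 0 (\<lambda>\<alpha>. pois (EXa \<alpha>))"
  defines "W \<equiv> (\<lambda>s w. \<Sum>\<alpha>\<in>rook_index_mark r s. coinc w \<alpha>)"
  defines "EW \<equiv> (\<lambda>s. measure_pmf.expectation P (\<lambda>w. real (W s w)))"
  defines "LW \<equiv> map_pmf (\<lambda>w. (W RR w, W CC w, W RC w, W CR w)) P"
  defines "LS \<equiv> pair_pmf (pois (EW RR)) (pair_pmf (pois (EW CC)) (pair_pmf (pois (EW RC)) (pois (EW CR))))"
  shows "dTV LX LY \<le> rook_bound n r \<and> dTV LW LS \<le> rook_bound n r"
proof -
  interpret R: rook_ctx n r by unfold_locales (use assms in auto)
  have P: "P = R.P" unfolding P_def by (rule R.P_eq)
  have I: "I = R.Ir" unfolding I_def R.Ir_def ..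
  have Xr: "R.Xr = (\<lambda>w \<alpha>. if \<alpha> \<in> I then coinc w \<alpha> else 0)"
    by (intro ext) (simp add: R.Xr_def I)
  have LX: "LX = map_pmf R.Xr R.P" unfolding LX_def Xr P ..
  have EXa: "EXa \<alpha> = R.lamr \<alpha>" if "\<alpha> \<in> I" for \<alpha>
    unfolding EXa_def R.lamr_def P using that by (simp add: Xr)
  have LY: "LY = Pi_pmf R.Ir 0 (\<lambda>\<alpha>. pois (R.lamr \<alpha>))"
    unfolding LY_def I[symmetric] by (intro Pi_pmf_cong refl) (simp add: EXa)
  have part1: "dTV LX LY \<le> rook_bound n r"
    unfolding dTV_def
  proof (rule cSUP_least)
    show "UNIV \<noteq> {}" by simp
    fix A :: "((nat \<times> nat) \<times> mark \<Rightarrow> nat) set"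
    interpret S: stein_setup R.P R.Ir R.Xr R.Br R.lamr A by (rule R.rook_setup)
    have "\<bar>measure_pmf.prob LX A - measure_pmf.prob LY A\<bar> \<le> S.RB R.Ir"
      unfolding LX LY by (rule S.stein_main)
    also have "\<dots> \<le> rook_bound n r" unfolding S.RB_expl by (rule R.RB_total)
    finally show "\<bar>measure_pmf.prob LX A - measure_pmf.prob LY A\<bar> \<le> rook_bound n r" .
  qed
  define Is where "Is s = rook_index_mark r s" for s
  have finI: "finite I" unfolding I using R.finIr .
  have finIs: "finite (Is s)" for s unfolding Is_def rook_index_mark_def I_def[symmetric]
    using finI by simp
  have IsI: "Is s \<subseteq> I" for s unfolding Is_def rook_index_mark_def I_def by auto
  define \<Phi> where "\<Phi> y = ((\<Sum>\<alpha>\<in>Is RR. y \<alpha>) :: nat, (\<Sum>\<alpha>\<in>Is CC. y \<alpha>) :: nat, (\<Sum>\<alpha>\<in>Is RC. y \<alpha>) :: nat, (\<Sum>\<alpha>\<in>Is CR. y \<alpha>) :: nat)"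
    for y :: "(nat \<times> nat) \<times> mark \<Rightarrow> nat"
  have LW: "LW = map_pmf \<Phi> LX"
  proof -
    have "W s w = (\<Sum>\<alpha>\<in>Is s. if \<alpha> \<in> I then coinc w \<alpha> else 0)" for s w
      unfolding W_def Is_def[symmetric] using IsI[of s] by (intro sum.cong refl) auto
    thus ?thesis unfolding LW_def LX_def map_pmf_comp \<Phi>_def by simp
  qed
  have EXa0: "0 \<le> EXa \<alpha>" for \<alpha> unfolding EXa_def by (rule Bochner_Integration.integral_nonneg) simp
  have EW: "EW s = (\<Sum>\<alpha>\<in>Is s. EXa \<alpha>)" for s
  proof -
    have "EW s = measure_pmf.expectation P (\<lambda>w. \<Sum>\<alpha>\<in>Is s. real (coinc w \<alpha>))"
      unfolding EW_def W_def Is_def by simp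
    also have "\<dots> = (\<Sum>\<alpha>\<in>Is s. EXa \<alpha>)" unfolding EXa_def
      by (rule Bochner_Integration.integral_sum) (auto intro!: pmf_bounded_integrable[where C=1] simp: coinc_le1'[simplified])
    finally show ?thesis .
  qed
  have Ieq: "I = Is RR \<union> (Is CC \<union> (Is RC \<union> Is CR))"
    unfolding Is_def rook_index_mark_def I_def using mark.exhaust by auto
  let ?p = "\<lambda>\<alpha>. pois (EXa \<alpha>)"
  have ps: "map_pmf (\<lambda>y. \<Sum>\<alpha>\<in>Is s. y \<alpha>) (Pi_pmf (Is s) 0 ?p) = pois (EW s)" for s
    unfolding EW by (rule pois_sum[OF finIs EXa0])
  have dj: "Is s \<inter> Is t = {}" if "s \<noteq> t" for s t unfolding Is_def rook_index_mark_def using that by auto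
  have LS: "LS = map_pmf \<Phi> LY"
  proof -
    have "map_pmf \<Phi> LY = map_pmf (\<lambda>y. ((\<Sum>\<alpha>\<in>Is RR. y \<alpha>), (\<Sum>\<alpha>\<in>Is CC. y \<alpha>), (\<Sum>\<alpha>\<in>Is RC. y \<alpha>), (\<Sum>\<alpha>\<in>Is CR. y \<alpha>)))
         (Pi_pmf (Is RR \<union> (Is CC \<union> (Is RC \<union> Is CR))) 0 ?p)"
      unfolding LY_def Ieq \<Phi>_def ..
    also have "\<dots> = pair_pmf (pois (EW RR)) (map_pmf (\<lambda>y. ((\<Sum>\<alpha>\<in>Is CC. y \<alpha>), (\<Sum>\<alpha>\<in>Is RC. y \<alpha>), (\<Sum>\<alpha>\<in>Is CR. y \<alpha>)))
         (Pi_pmf (Is CC \<union> (Is RC \<union> Is CR)) 0 ?p))"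
      by (subst Pi_split_map) (use finIs dj in \<open>auto simp: ps intro!: sum.cong\<close>)
    also have "map_pmf (\<lambda>y. ((\<Sum>\<alpha>\<in>Is CC. y \<alpha>), (\<Sum>\<alpha>\<in>Is RC. y \<alpha>), (\<Sum>\<alpha>\<in>Is CR. y \<alpha>)))
         (Pi_pmf (Is CC \<union> (Is RC \<union> Is CR)) 0 ?p) =
         pair_pmf (pois (EW CC)) (map_pmf (\<lambda>y. ((\<Sum>\<alpha>\<in>Is RC. y \<alpha>), (\<Sum>\<alpha>\<in>Is CR. y \<alpha>))) (Pi_pmf (Is RC \<union> Is CR) 0 ?p))"
      by (subst Pi_split_map) (use finIs dj in \<open>auto simp: ps intro!: sum.cong\<close>)
    also have "map_pmf (\<lambda>y. ((\<Sum>\<alpha>\<in>Is RC. y \<alpha>), (\<Sum>\<alpha>\<in>Is CR. y \<alpha>))) (Pi_pmf (Is RC \<union> Is CR) 0 ?p) =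
         pair_pmf (pois (EW RC)) (pois (EW CR))"
      by (subst Pi_split_map) (use finIs dj in \<open>auto simp: ps intro!: sum.cong\<close>)
    finally show ?thesis unfolding LS_def by simp
  qed
  have "dTV LW LS \<le> dTV LX LY" unfolding LW LS by (rule dTV_map)
  with part1 show ?thesis by simp
qed


end
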